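(* Let $V=\mathbb{C}^6$ and let $\pi\subset\mathbb{P}(\wedge^2V)$ be a projective plane all of whose points have rank exactly four. Suppose that $\pi$ contains general lines, that the pivots of all general lines in $\pi$ pass through a common point of $\mathbb{P}(V)$, and that these pivots are not all equal. Then $\pi$ is $PGL_6$-equivalent to the plane $\pi_p$ spanned by $e_0\wedge e_3+e_1\wedge e_2$, $e_0\wedge e_4+e_2\wedge e_3$, $e_0\wedge e_5+e_1\wedge e_3$, where $e_0,\dots,e_5$ is a basis of $V$.
   Context: Elements of $\wedge^2\mathbb{C}^6$ are identified with skew-symmetric $6\times6$ matrices; rank means matrix rank. A projective line in $\mathbb{P}(\wedge^2V)$ all of whose points have rank four is called general if it is $PGL_6$-equivalent to the line spanned by $e_0\wedge e_2+e_1\wedge e_3$ and $e_0\wedge e_4+e_1\wedge e_5$. A general line $\ell$ is contained in $\mathbb{P}(W\wedge V)$ for a unique $2$-dimensional subspace $W\subset V$ (for the line above, $W=\langle e_0,e_1\rangle$); the projective line $\mathbb{P}(W)\subset\mathbb{P}(V)$ is called the pivot of $\ell$. Work over $\mathbb{C}$. *)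

theory Defs
  imports "HOL-Analysis.Analysis"
begin

type_synonym vec6 = "complex ^ 6"
type_synonym mat6 = "complex ^ 6 ^ 6"

text \<open>Elements of wedge^2 C^6 as skew-symmetric 6x6 complex matrices.\<close>

definition skew :: "mat6 \<Rightarrow> bool" where
  "skew A \<longleftrightarrow> transpose A = - A"

definition smat :: "complex \<Rightarrow> mat6 \<Rightarrow> mat6" where
  "smat c A = (\<chi> i j. c * A $ i $ j)"

definition wedge :: "vec6 \<Rightarrow> vec6 \<Rightarrow> mat6" where
  "wedge u v = (\<chi> i j. u $ i * v $ j - v $ i * u $ j)"

definition e :: "6 \<Rightarrow> vec6" where
  "e k = axis k 1"

definition span2 :: "mat6 \<Rightarrow> mat6 \<Rightarrow> mat6 set" where
  "span2 A B = {smat a A + smat b B | a b. True}"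

definition span3 :: "mat6 \<Rightarrow> mat6 \<Rightarrow> mat6 \<Rightarrow> mat6 set" where
  "span3 A B C = {smat a A + smat b B + smat c C | a b c. True}"

definition indep2 :: "mat6 \<Rightarrow> mat6 \<Rightarrow> bool" where
  "indep2 A B \<longleftrightarrow> (\<forall>a b. smat a A + smat b B = 0 \<longrightarrow> a = 0 \<and> b = 0)"

definition indep3 :: "mat6 \<Rightarrow> mat6 \<Rightarrow> mat6 \<Rightarrow> bool" where
  "indep3 A B C \<longleftrightarrow>
     (\<forall>a b c. smat a A + smat b B + smat c C = 0 \<longrightarrow> a = 0 \<and> b = 0 \<and> c = 0)"

text \<open>Projective lines / planes in P(wedge^2 V), represented by the
  corresponding 2- / 3-dimensional linear subspaces of skew matrices.\<close>
definition proj_line :: "mat6 set \<Rightarrow> bool" where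
  "proj_line L \<longleftrightarrow> (\<exists>A B. skew A \<and> skew B \<and> indep2 A B \<and> L = span2 A B)"

definition proj_plane :: "mat6 set \<Rightarrow> bool" where
  "proj_plane P \<longleftrightarrow>
     (\<exists>A B C. skew A \<and> skew B \<and> skew C \<and> indep3 A B C \<and> P = span3 A B C)"

definition all_rank4 :: "mat6 set \<Rightarrow> bool" where
  "all_rank4 S \<longleftrightarrow> (\<forall>A\<in>S. A \<noteq> 0 \<longrightarrow> rank A = 4)"

text \<open>Action of PGL_6 (represented by GL_6) on wedge^2 V: A \<mapsto> g A g^T.\<close>
definition act :: "mat6 \<Rightarrow> mat6 set \<Rightarrow> mat6 set" where
  "act g S = (\<lambda>A. g ** A ** transpose g) ` S"

definition pgl_equiv :: "mat6 set \<Rightarrow> mat6 set \<Rightarrow> bool" where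
  "pgl_equiv S T \<longleftrightarrow> (\<exists>g. invertible g \<and> act g S = T)"

definition line0 :: "mat6 set" where
  "line0 = span2 (wedge (e 0) (e 2) + wedge (e 1) (e 3))
                 (wedge (e 0) (e 4) + wedge (e 1) (e 5))"

definition general_line :: "mat6 set \<Rightarrow> bool" where
  "general_line L \<longleftrightarrow> proj_line L \<and> all_rank4 L \<and> pgl_equiv line0 L"

definition sub2 :: "vec6 set \<Rightarrow> bool" where
  "sub2 W \<longleftrightarrow> (\<exists>u w. (\<forall>a b. a *s u + b *s w = 0 \<longrightarrow> a = 0 \<and> b = 0)
                     \<and> W = {a *s u + b *s w | a b. True})"

definition wedgeV :: "vec6 set \<Rightarrow> mat6 set" where
  "wedgeV W = {A. \<exists>n w v. (\<forall>i<n. w i \<in> W) \<and> A = (\<Sum>i<(n::nat). wedge (w i) (v i))}"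

text \<open>W (i.e. the projective line P(W)) is the pivot of the general line L.\<close>
definition is_pivot :: "mat6 set \<Rightarrow> vec6 set \<Rightarrow> bool" where
  "is_pivot L W \<longleftrightarrow> sub2 W \<and> L \<subseteq> wedgeV W"

definition plane_p :: "mat6 set" where
  "plane_p = span3 (wedge (e 0) (e 3) + wedge (e 1) (e 2))
                   (wedge (e 0) (e 4) + wedge (e 2) (e 3))
                   (wedge (e 0) (e 5) + wedge (e 1) (e 3))"

end

theory Submission
  imports Defs
begin

lemma exhaust6: fixes x :: 6 shows "x = 0 \<or> x = 1 \<or> x = 2 \<or> x = 3 \<or> x = 4 \<or> x = 5"
proof (induct x)
  case (of_int z)
  then have "z = 0 \<or> z = 1 \<or> z = 2 \<or> z = 3 \<or> z = 4 \<or> z = 5" by fastforce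
  then show ?case by auto
qed
lemma UNIV6: "(UNIV::6 set) = {0,1,2,3,4,5}" using exhaust6 by auto
lemma sum6: "sum f (UNIV::6 set) = f 0 + f 1 + f 2 + f 3 + f 4 + f 5"
  unfolding UNIV6 by (simp add: add.assoc)
lemma all6: "(\<forall>i::6. P i) \<longleftrightarrow> P 0 \<and> P 1 \<and> P 2 \<and> P 3 \<and> P 4 \<and> P 5"
  by (metis exhaust6)

lemma smat_nth[simp]: "smat c A $ i $ j = c * A $ i $ j" by (simp add: smat_def)
lemma wedge_nth[simp]: "wedge u v $ i $ j = u $ i * v $ j - v $ i * u $ j" by (simp add: wedge_def)
lemma e_nth[simp]: "e k $ i = (if i = k then 1 else 0)" by (simp add: e_def axis_def)

definition pl :: "vec6 \<Rightarrow> vec6 \<Rightarrow> 6 \<Rightarrow> 6 \<Rightarrow> complex" where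
  "pl a b k l = a$k * b$l - a$l * b$k"

definition q4 :: "mat6 \<Rightarrow> vec6 \<Rightarrow> vec6 \<Rightarrow> 6 \<Rightarrow> 6 \<Rightarrow> 6 \<Rightarrow> 6 \<Rightarrow> complex" where
  "q4 X a b i j k l = X$i$j * pl a b k l - X$i$k * pl a b j l + X$i$l * pl a b j k
      + X$j$k * pl a b i l - X$j$l * pl a b i k + X$k$l * pl a b i j"

lemma q4_add: "q4 (A + B) a b i j k l = q4 A a b i j k l + q4 B a b i j k l"
  by (simp add: q4_def algebra_simps)
lemma q4_zero: "q4 0 a b i j k l = 0" by (simp add: q4_def)

lemma q4_wedge_span:
  assumes "y = c1 *s u + d1 *s w" "a = c2 *s u + d2 *s w" "b = c3 *s u + d3 *s w"
  shows "q4 (wedge y v) a b i j k l = 0"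
  unfolding assms by (simp add: q4_def pl_def algebra_simps)

lemma q4_wedgeV:
  assumes X: "X \<in> wedgeV {c *s u + d *s w | c d. True}"
    and a: "a \<in> {c *s u + d *s w | c d. True}" and b: "b \<in> {c *s u + d *s w | c d. True}"
  shows "q4 X a b i j k l = 0"
proof -
  obtain n ww v where ww: "\<forall>i<n. ww i \<in> {c *s u + d *s w | c d. True}"
    and Xe: "X = (\<Sum>i<(n::nat). wedge (ww i) (v i))"
    using X unfolding wedgeV_def by blast
  obtain c2 d2 where a2: "a = c2 *s u + d2 *s w" using a by blast
  obtain c3 d3 where b3: "b = c3 *s u + d3 *s w" using b by blast
  have "\<forall>m\<le>n. q4 (\<Sum>i<m. wedge (ww i) (v i)) a b i j k l = 0"
  proof (intro allI impI)
    fix m assume "m \<le> n"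
    then show "q4 (\<Sum>i<m. wedge (ww i) (v i)) a b i j k l = 0"
    proof (induct m)
      case 0 then show ?case by (simp add: q4_zero)
    next
      case (Suc m)
      then have "m < n" by simp
      with ww obtain c1 d1 where "ww m = c1 *s u + d1 *s w" by blast
      then have "q4 (wedge (ww m) (v m)) a b i j k l = 0"
        using q4_wedge_span[OF _ a2 b3] by blast
      with Suc show ?case by (simp add: q4_add)
    qed
  qed
  then show ?thesis using Xe by simp
qed


lemma act_nth: "(G ** A ** transpose G) $ i $ j = (\<Sum>k\<in>UNIV. \<Sum>l\<in>UNIV. G$i$k * A$k$l * G$j$l)"
  by (simp add: matrix_matrix_mult_def transpose_def sum_distrib_left sum_distrib_right mult.assoc
       mult.commute mult.left_commute) (rule sum.swap)


lemma act_wedge: "G ** wedge u v ** transpose G = wedge (G *v u) (G *v v)"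
proof -
  have "(G ** wedge u v ** transpose G) $ i $ j = wedge (G *v u) (G *v v) $ i $ j" for i j
  proof -
    have "(G ** wedge u v ** transpose G) $ i $ j
        = (\<Sum>k\<in>UNIV. \<Sum>l\<in>UNIV. G$i$k * u$k * (G$j$l * v$l) - G$i$k * v$k * (G$j$l * u$l))"
      unfolding act_nth wedge_nth
      by (intro sum.cong refl) (simp add: algebra_simps)
    also have "\<dots> = wedge (G *v u) (G *v v) $ i $ j"
      by (simp add: matrix_vector_mult_def sum_product sum_subtractf)
    finally show ?thesis .
  qed
  then show ?thesis by (simp add: vec_eq_iff)
qed

lemma act_add: "G ** (A + B) ** transpose G = G ** A ** transpose G + G ** B ** transpose G"
  by (simp add: vec_eq_iff act_nth sum.distrib distrib_left distrib_right)

lemma act_smat: "G ** smat c A ** transpose G = smat c (G ** A ** transpose G)"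
  by (simp add: vec_eq_iff act_nth sum_distrib_left mult.assoc mult.left_commute)

lemma act_zero: "G ** (0::mat6) ** transpose G = 0"
  by (simp add: vec_eq_iff act_nth)

lemma act_comp: fixes G H :: mat6 shows "G ** (H ** X ** transpose H) ** transpose G = (G ** H) ** X ** transpose (G ** H)"
  by (simp only: matrix_mul_assoc matrix_transpose_mul)

lemma act_id: "mat 1 ** X ** transpose (mat 1) = (X::mat6)"
  by (simp add: transpose_mat)

lemma act_sum: "G ** (\<Sum>i<(n::nat). A i) ** transpose G = (\<Sum>i<n. G ** A i ** transpose G)"
  by (induct n) (simp_all add: act_add act_zero)

lemma mv_lin: fixes G :: mat6 shows "G *v (c *s u + d *s w) = c *s (G *v u) + d *s (G *v w)"
  by (simp add: matrix_vector_right_distrib vector_scalar_commute)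


lemma act_span2: "act G (span2 A B) = span2 (G ** A ** transpose G) (G ** B ** transpose G)"
proof -
  have h: "\<And>a b. G ** (smat a A + smat b B) ** transpose G = smat a (G ** A ** transpose G) + smat b (G ** B ** transpose G)"
    by (simp add: act_add act_smat)
  show ?thesis
  proof (rule set_eqI, rule iffI)
    fix X assume "X \<in> act G (span2 A B)"
    then obtain a b where "X = G ** (smat a A + smat b B) ** transpose G" unfolding act_def span2_def by auto
    then show "X \<in> span2 (G ** A ** transpose G) (G ** B ** transpose G)" unfolding span2_def h by blast
  next
    fix X assume "X \<in> span2 (G ** A ** transpose G) (G ** B ** transpose G)"
    then obtain a b where "X = smat a (G ** A ** transpose G) + smat b (G ** B ** transpose G)" unfolding span2_def by auto
    then have "X = G ** (smat a A + smat b B) ** transpose G" by (simp add: h)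
    then show "X \<in> act G (span2 A B)" unfolding act_def span2_def by blast
  qed
qed

lemma act_span3: "act G (span3 A B C) = span3 (G ** A ** transpose G) (G ** B ** transpose G) (G ** C ** transpose G)"
proof -
  have h: "\<And>a b c. G ** (smat a A + smat b B + smat c C) ** transpose G = smat a (G ** A ** transpose G) + smat b (G ** B ** transpose G) + smat c (G ** C ** transpose G)"
    by (simp add: act_add act_smat)
  show ?thesis
  proof (rule set_eqI, rule iffI)
    fix X assume "X \<in> act G (span3 A B C)"
    then obtain a b c where "X = G ** (smat a A + smat b B + smat c C) ** transpose G" unfolding act_def span3_def by auto
    then show "X \<in> span3 (G ** A ** transpose G) (G ** B ** transpose G) (G ** C ** transpose G)" unfolding span3_def h by blast
  next
    fix X assume "X \<in> span3 (G ** A ** transpose G) (G ** B ** transpose G) (G ** C ** transpose G)"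
    then obtain a b c where "X = smat a (G ** A ** transpose G) + smat b (G ** B ** transpose G) + smat c (G ** C ** transpose G)" unfolding span3_def by auto
    then have "X = G ** (smat a A + smat b B + smat c C) ** transpose G" by (simp add: h)
    then show "X \<in> act G (span3 A B C)" unfolding act_def span3_def by blast
  qed
qed

lemma act_act: fixes G H :: mat6 shows "act G (act H S) = act (G ** H) S"
  unfolding act_def image_image act_comp ..

lemma act_inv: fixes G H :: mat6 assumes "H ** G = mat 1" shows "act H (act G S) = S"
  unfolding act_act using assms by (simp add: act_def act_id)

lemma act_inj: fixes G H :: mat6 assumes "H ** G = mat 1" "G ** A ** transpose G = G ** B ** transpose G" shows "A = B"
proof -
  have "H ** (G ** A ** transpose G) ** transpose H = H ** (G ** B ** transpose G) ** transpose H"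
    using assms(2) by simp
  then show ?thesis unfolding act_comp assms(1) act_id .
qed

lemma indep3_act: fixes G H :: mat6 assumes "H ** G = mat 1" "indep3 A B C"
  shows "indep3 (G ** A ** transpose G) (G ** B ** transpose G) (G ** C ** transpose G)"
  unfolding indep3_def
proof (intro allI impI)
  fix a b c assume "smat a (G ** A ** transpose G) + smat b (G ** B ** transpose G) + smat c (G ** C ** transpose G) = 0"
  then have "G ** (smat a A + smat b B + smat c C) ** transpose G = G ** 0 ** transpose G"
    by (simp add: act_add act_smat act_zero)
  then have "smat a A + smat b B + smat c C = 0" using act_inj[OF assms(1)] by blast
  then show "a = 0 \<and> b = 0 \<and> c = 0" using assms(2) unfolding indep3_def by blast
qed

lemma indep2_act: fixes G H :: mat6 assumes "H ** G = mat 1" "indep2 A B"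
  shows "indep2 (G ** A ** transpose G) (G ** B ** transpose G)"
  unfolding indep2_def
proof (intro allI impI)
  fix a b assume "smat a (G ** A ** transpose G) + smat b (G ** B ** transpose G) = 0"
  then have "G ** (smat a A + smat b B) ** transpose G = G ** 0 ** transpose G"
    by (simp add: act_add act_smat act_zero)
  then have "smat a A + smat b B = 0" using act_inj[OF assms(1)] by blast
  then show "a = 0 \<and> b = 0" using assms(2) unfolding indep2_def by blast
qed

lemma act_wedgeV: "act G (wedgeV W) \<subseteq> wedgeV ((*v) G ` W)"
proof
  fix Y assume "Y \<in> act G (wedgeV W)"
  then obtain X where X: "X \<in> wedgeV W" and Y: "Y = G ** X ** transpose G" unfolding act_def by auto
  then obtain n w v where w: "\<forall>i<n. w i \<in> W" and Xe: "X = (\<Sum>i<(n::nat). wedge (w i) (v i))"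
    unfolding wedgeV_def by blast
  have "Y = (\<Sum>i<n. wedge (G *v w i) (G *v v i))" using Y Xe by (simp add: act_sum act_wedge)
  moreover have "\<forall>i<n. G *v w i \<in> (*v) G ` W" using w by auto
  ultimately show "Y \<in> wedgeV ((*v) G ` W)" unfolding wedgeV_def mem_Collect_eq
    by (intro exI[of _ n] exI[of _ "\<lambda>i. G *v w i"] exI[of _ "\<lambda>i. G *v v i"]) simp
qed

lemma image_span2: fixes G :: mat6 shows
  "(*v) G ` {c *s u + d *s w | c d. True} = {c *s (G *v u) + d *s (G *v w) | c d. True}"
proof (rule set_eqI, rule iffI)
  fix x assume "x \<in> (*v) G ` {c *s u + d *s w | c d. True}"
  then obtain c d where "x = G *v (c *s u + d *s w)" by auto
  then show "x \<in> {c *s (G *v u) + d *s (G *v w) | c d. True}" by (auto simp: mv_lin)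
next
  fix x assume "x \<in> {c *s (G *v u) + d *s (G *v w) | c d. True}"
  then obtain c d where "x = c *s (G *v u) + d *s (G *v w)" by auto
  then have "x = G *v (c *s u + d *s w)" by (simp add: mv_lin)
  then show "x \<in> (*v) G ` {c *s u + d *s w | c d. True}" by blast
qed


lemma rank_wedge_le2: "rank (wedge a b) \<le> 2"
proof -
  have "rows (wedge a b) \<subseteq> vec.span {a, b}"
  proof
    fix r assume "r \<in> rows (wedge a b)"
    then obtain i where r: "r = row i (wedge a b)" by (auto simp: rows_def)
    have "r = (a $ i) *s b + (- (b $ i)) *s a"
      by (simp add: r row_def vec_eq_iff algebra_simps)
    then show "r \<in> vec.span {a, b}"
      by (metis add.commute insertCI vec.span_add vec.span_base vec.span_scale)
  qed
  then have "vec.dim (rows (wedge a b)) \<le> card {a, b}" by (rule vec.dim_le_card) simp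
  also have "\<dots> \<le> 2" by (simp add: card_insert_le_m1)
  finally show ?thesis by (simp add: row_rank_def_gen)
qed

lemma rank_inj: fixes X :: mat6 assumes "\<forall>z. X *v z = 0 \<longrightarrow> z = 0" shows "rank X = 6"
proof -
  have "\<exists>B. B ** X = mat 1" using assms matrix_left_invertible_ker by blast
  then have "vec.span (rows X) = UNIV" using matrix_left_invertible_span_rows_gen by blast
  then have "vec.dim (rows X) = vec.dim (UNIV :: vec6 set)" by (metis vec.dim_span)
  moreover have "vec.dim (UNIV :: vec6 set) = 6" by (simp only: vec_dim_card) simp
  ultimately show ?thesis by (simp only: row_rank_def_gen)
qed


lemma dep4: fixes v1 v2 v3 v4 :: "complex^3"
  shows "\<exists>c1 c2 c3 c4. (c1 \<noteq> 0 \<or> c2 \<noteq> 0 \<or> c3 \<noteq> 0 \<or> c4 \<noteq> 0) \<and>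
           c1 *s v1 + c2 *s v2 + c3 *s v3 + c4 *s v4 = 0"
proof (cases "distinct [v1, v2, v3, v4]")
  case True
  let ?S = "{v1, v2, v3, v4}"
  have cardS: "card ?S = 4" using True by simp
  have "vec.dim ?S \<le> vec.dim (UNIV :: (complex^3) set)" by (rule vec.dim_subset) simp
  also have "\<dots> = 3" by (simp only: vec_dim_card) simp
  finally have "vec.dependent ?S" using cardS by (intro vec.dependent_biggerset_general) simp
  then obtain u where u: "\<exists>v\<in>?S. u v \<noteq> 0" "(\<Sum>v\<in>?S. u v *s v) = 0"
    using vec.dependent_finite[of ?S] by auto
  have "(\<Sum>v\<in>?S. u v *s v) = u v1 *s v1 + u v2 *s v2 + u v3 *s v3 + u v4 *s v4"
    using True by (simp add: add.assoc)
  then show ?thesis using u by (intro exI[of _ "u v1"] exI[of _ "u v2"] exI[of _ "u v3"] exI[of _ "u v4"]) auto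
next
  case False
  then have "v1 = v2 \<or> v1 = v3 \<or> v1 = v4 \<or> v2 = v3 \<or> v2 = v4 \<or> v3 = v4" by auto
  then show ?thesis
  proof (elim disjE)
    assume "v1 = v2" then show ?thesis by (intro exI[of _ 1] exI[of _ "-1"] exI[of _ 0] exI[of _ 0]) (simp add: vec_eq_iff)
  next
    assume "v1 = v3" then show ?thesis by (intro exI[of _ 1] exI[of _ 0] exI[of _ "-1"] exI[of _ 0]) (simp add: vec_eq_iff)
  next
    assume "v1 = v4" then show ?thesis by (intro exI[of _ 1] exI[of _ 0] exI[of _ 0] exI[of _ "-1"]) (simp add: vec_eq_iff)
  next
    assume "v2 = v3" then show ?thesis by (intro exI[of _ 0] exI[of _ 1] exI[of _ "-1"] exI[of _ 0]) (simp add: vec_eq_iff)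
  next
    assume "v2 = v4" then show ?thesis by (intro exI[of _ 0] exI[of _ 1] exI[of _ 0] exI[of _ "-1"]) (simp add: vec_eq_iff)
  next
    assume "v3 = v4" then show ?thesis by (intro exI[of _ 0] exI[of _ 0] exI[of _ 1] exI[of _ "-1"]) (simp add: vec_eq_iff)
  qed
qed

definition comb3 :: "mat6 \<Rightarrow> mat6 \<Rightarrow> mat6 \<Rightarrow> complex^3 \<Rightarrow> mat6" where
  "comb3 A B C x = smat (x$1) A + smat (x$2) B + smat (x$3) C"

lemma comb3_lin: "smat c1 (comb3 A B C x1) + smat c2 (comb3 A B C x2) + smat c3 (comb3 A B C x3) + smat c4 (comb3 A B C x4)
   = comb3 A B C (c1 *s x1 + c2 *s x2 + c3 *s x3 + c4 *s x4)"
  by (simp add: comb3_def vec_eq_iff algebra_simps)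

lemma comb3_0: "comb3 A B C 0 = 0" by (simp add: comb3_def vec_eq_iff)

lemma span3_memI: "smat a A + smat b B + smat c C \<in> span3 A B C"
  unfolding span3_def by blast

lemma span3_coord: assumes "X \<in> span3 A B C" obtains x where "X = comb3 A B C x"
proof -
  obtain a b c where "X = smat a A + smat b B + smat c C" using assms unfolding span3_def by blast
  then have "X = comb3 A B C (vector [a, b, c])" by (simp add: comb3_def)
  then show ?thesis using that by blast
qed

lemma dep4_mat: assumes "X \<in> span3 A B C" "Y \<in> span3 A B C" "Z \<in> span3 A B C" "W \<in> span3 A B C"
  shows "\<exists>c1 c2 c3 c4. (c1 \<noteq> 0 \<or> c2 \<noteq> 0 \<or> c3 \<noteq> 0 \<or> c4 \<noteq> 0) \<and>
           smat c1 X + smat c2 Y + smat c3 Z + smat c4 W = 0"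
proof -
  obtain x where x: "X = comb3 A B C x" using span3_coord[OF assms(1)] by blast
  obtain y where y: "Y = comb3 A B C y" using span3_coord[OF assms(2)] by blast
  obtain z where z: "Z = comb3 A B C z" using span3_coord[OF assms(3)] by blast
  obtain w where w: "W = comb3 A B C w" using span3_coord[OF assms(4)] by blast
  note xyzw = x y z w
  obtain c1 c2 c3 c4 where c: "c1 \<noteq> 0 \<or> c2 \<noteq> 0 \<or> c3 \<noteq> 0 \<or> c4 \<noteq> 0"
    "c1 *s x + c2 *s y + c3 *s z + c4 *s w = 0" using dep4[of x y z w] by (elim exE conjE) 
  have "smat c1 X + smat c2 Y + smat c3 Z + smat c4 W = 0"
    unfolding xyzw comb3_lin c(2) comb3_0 ..
  then show ?thesis using c(1) by (intro exI[of _ c1] exI[of _ c2] exI[of _ c3] exI[of _ c4]) simp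
qed

lemma span3_closed: assumes "X \<in> span3 A B C" "Y \<in> span3 A B C" "Z \<in> span3 A B C"
  shows "smat a X + smat b Y + smat c Z \<in> span3 A B C"
proof -
  obtain x where x: "X = comb3 A B C x" using span3_coord[OF assms(1)] by blast
  obtain y where y: "Y = comb3 A B C y" using span3_coord[OF assms(2)] by blast
  obtain z where z: "Z = comb3 A B C z" using span3_coord[OF assms(3)] by blast
  note xyz = x y z
  have "smat a X + smat b Y + smat c Z = smat a X + smat b Y + smat c Z + smat 0 X" by (simp add: vec_eq_iff)
  also have "\<dots> = comb3 A B C (a *s x + b *s y + c *s z + 0 *s x)" unfolding xyz comb3_lin ..
  finally show ?thesis unfolding comb3_def by (simp only: span3_memI)
qed

lemma span3_eq: assumes "X \<in> span3 A B C" "Y \<in> span3 A B C" "Z \<in> span3 A B C" "indep3 X Y Z"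
  shows "span3 X Y Z = span3 A B C"
proof
  show "span3 X Y Z \<subseteq> span3 A B C"
  proof
    fix W assume "W \<in> span3 X Y Z"
    then obtain a b c where "W = smat a X + smat b Y + smat c Z" unfolding span3_def by blast
    then show "W \<in> span3 A B C" using span3_closed[OF assms(1-3)] by simp
  qed
next
  show "span3 A B C \<subseteq> span3 X Y Z"
  proof
    fix W assume W: "W \<in> span3 A B C"
    obtain c1 c2 c3 c4 where c: "c1 \<noteq> 0 \<or> c2 \<noteq> 0 \<or> c3 \<noteq> 0 \<or> c4 \<noteq> 0"
      "smat c1 X + smat c2 Y + smat c3 Z + smat c4 W = 0" using dep4_mat[OF assms(1-3) W] by (elim exE conjE)
    have c4: "c4 \<noteq> 0"
    proof
      assume "c4 = 0"
      then have "smat c1 X + smat c2 Y + smat c3 Z = 0" using c(2) by (simp add: vec_eq_iff)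
      then have "c1 = 0 \<and> c2 = 0 \<and> c3 = 0" using assms(4) unfolding indep3_def by blast
      then show False using c(1) \<open>c4 = 0\<close> by blast
    qed
    have "W = smat (- c1 / c4) X + smat (- c2 / c4) Y + smat (- c3 / c4) Z"
    proof -
      have e1: "\<forall>i j. c1 * X$i$j + c2 * Y$i$j + c3 * Z$i$j + c4 * W$i$j = 0"
        using c(2) by (simp add: vec_eq_iff)
      have e2: "\<And>x y z w::complex. c1 * x + c2 * y + c3 * z + c4 * w = 0 \<Longrightarrow>
          w = - c1 / c4 * x + - c2 / c4 * y + - c3 / c4 * z"
      proof -
        fix x y z w :: complex assume "c1 * x + c2 * y + c3 * z + c4 * w = 0"
        then have "c4 * w = - c1 * x - c2 * y - c3 * z" by (simp add: algebra_simps add_eq_0_iff)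
        moreover have "c4 * (- c1 / c4 * x + - c2 / c4 * y + - c3 / c4 * z) = - c1 * x - c2 * y - c3 * z"
          using c4 by (simp add: field_simps)
        ultimately show "w = - c1 / c4 * x + - c2 / c4 * y + - c3 / c4 * z" using c4 mult_left_cancel by metis
      qed
      show ?thesis
      proof (subst vec_eq_iff, intro allI, subst vec_eq_iff, intro allI)
        fix i j
        have "W$i$j = - c1 / c4 * X$i$j + - c2 / c4 * Y$i$j + - c3 / c4 * Z$i$j"
          using e1 by (intro e2) blast
        then show "W$i$j = (smat (- c1 / c4) X + smat (- c2 / c4) Y + smat (- c3 / c4) Z) $ i $ j" by simp
      qed
    qed
    then show "W \<in> span3 X Y Z" by (simp only: span3_memI)
  qed
qed


definition R2 :: "mat6 set \<Rightarrow> bool" where "R2 P \<longleftrightarrow> (\<forall>a b. wedge a b \<in> P \<longrightarrow> wedge a b = 0)"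
definition R6 :: "mat6 set \<Rightarrow> bool" where "R6 P \<longleftrightarrow> (\<forall>X\<in>P. \<not> (\<forall>z. X *v z = 0 \<longrightarrow> z = 0))"
definition SK :: "mat6 set \<Rightarrow> bool" where "SK P \<longleftrightarrow> (\<forall>X\<in>P. \<forall>i j. X$j$i = - X$i$j)"

lemma rank4_R2: assumes "all_rank4 P" shows "R2 P"
  unfolding R2_def
proof (intro allI impI)
  fix a b assume "wedge a b \<in> P"
  show "wedge a b = 0"
  proof (rule ccontr)
    assume "wedge a b \<noteq> 0"
    then have "rank (wedge a b) = 4" using assms \<open>wedge a b \<in> P\<close> unfolding all_rank4_def by blast
    then show False using rank_wedge_le2[of a b] by simp
  qed
qed

lemma rank4_R6: assumes "all_rank4 P" shows "R6 P"
  unfolding R6_def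
proof (intro ballI notI)
  fix X assume X: "X \<in> P" and inj: "\<forall>z. X *v z = 0 \<longrightarrow> z = 0"
  have r6: "rank X = 6" using rank_inj[OF inj] .
  have "X \<noteq> 0"
  proof
    assume "X = 0"
    then have "e 0 = 0" using inj by simp
    then show False by (simp add: vec_eq_iff) (metis one_neq_zero)
  qed
  then have "rank X = 4" using assms X unfolding all_rank4_def by blast
  then show False using r6 by simp
qed

lemma R2_transfer: fixes G H :: mat6 assumes GH: "G ** H = mat 1" and R: "R2 P" shows "R2 (act H P)"
  unfolding R2_def
proof (intro allI impI)
  fix a b assume "wedge a b \<in> act H P"
  then obtain X where X: "X \<in> P" "wedge a b = H ** X ** transpose H" unfolding act_def by auto
  have "G ** wedge a b ** transpose G = X" unfolding X(2) act_comp GH act_id ..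
  then have "wedge (G *v a) (G *v b) \<in> P" using X(1) by (simp add: act_wedge)
  then have "wedge (G *v a) (G *v b) = 0" using R unfolding R2_def by blast
  then have "X = 0" using \<open>G ** wedge a b ** transpose G = X\<close> by (simp add: act_wedge)
  then show "wedge a b = 0" using X(2) by (simp add: act_zero)
qed

lemma R6_transfer: fixes G H :: mat6 assumes GH: "G ** H = mat 1" "H ** G = mat 1" and R: "R6 P" shows "R6 (act H P)"
  unfolding R6_def
proof (intro ballI notI)
  fix Y assume "Y \<in> act H P" and inj: "\<forall>z. Y *v z = 0 \<longrightarrow> z = 0"
  then obtain X where X: "X \<in> P" "Y = H ** X ** transpose H" unfolding act_def by auto
  have XY: "X = G ** Y ** transpose G" unfolding X(2) act_comp GH(1) act_id ..
  have hg: "\<And>w. H *v (G *v w) = w" by (simp only: matrix_vector_mul_assoc GH(2) matrix_vector_mul_lid)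
  have tt: "transpose H ** transpose G = mat 1" by (simp only: GH(1) transpose_mat flip: matrix_transpose_mul)
  have thg: "\<And>w. transpose H *v (transpose G *v w) = w" by (simp only: matrix_vector_mul_assoc tt matrix_vector_mul_lid)
  have "\<forall>z. X *v z = 0 \<longrightarrow> z = 0"
  proof (intro allI impI)
    fix z assume "X *v z = 0"
    moreover have "X *v z = G *v (Y *v (transpose G *v z))" by (simp only: XY matrix_vector_mul_assoc matrix_mul_assoc)
    ultimately have "G *v (Y *v (transpose G *v z)) = 0" by simp
    then have "H *v (G *v (Y *v (transpose G *v z))) = 0" by simp
    then have "Y *v (transpose G *v z) = 0" by (simp only: hg)
    then have "transpose G *v z = 0" using inj by blast
    then have "transpose H *v (transpose G *v z) = 0" by simp
    then show "z = 0" by (simp only: thg)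
  qed
  then show False using R X(1) unfolding R6_def by blast
qed

lemma SK_transfer: fixes H :: mat6 assumes "SK P" shows "SK (act H P)"
  unfolding SK_def
proof (intro ballI allI)
  fix Y i j assume "Y \<in> act H P"
  then obtain X where X: "X \<in> P" "Y = H ** X ** transpose H" unfolding act_def by auto
  have sk: "\<And>k l. X$l$k = - X$k$l" using assms X(1) unfolding SK_def by blast
  have "Y$j$i = (\<Sum>k\<in>UNIV. \<Sum>l\<in>UNIV. H$j$k * X$k$l * H$i$l)" unfolding X(2) act_nth ..
  also have "\<dots> = (\<Sum>l\<in>UNIV. \<Sum>k\<in>UNIV. H$j$k * X$k$l * H$i$l)" by (rule sum.swap)
  also have "\<dots> = (\<Sum>l\<in>UNIV. \<Sum>k\<in>UNIV. - (H$i$l * X$l$k * H$j$k))"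
  proof (intro sum.cong refl)
    fix k l show "H$j$k * X$k$l * H$i$l = - (H$i$l * X$l$k * H$j$k)" by (simp add: sk[of k l])
  qed
  also have "\<dots> = - (\<Sum>l\<in>UNIV. \<Sum>k\<in>UNIV. H$i$l * X$l$k * H$j$k)"
    by (simp add: sum_negf)
  also have "\<dots> = - Y$i$j" unfolding X(2) act_nth ..
  finally show "Y$j$i = - Y$i$j" .
qed

lemma inj_cert: fixes X :: mat6
  assumes sk: "\<And>i j. X$j$i = - X$i$j"
    and z: "X$1$2 = 0" "X$1$4 = 0" "X$2$4 = 0" "X$2$5 = 0" "X$4$5 = 0"
    and n15: "X$1$5 \<noteq> 0" and D: "X$0$2 * X$3$4 + X$0$4 * X$2$3 \<noteq> 0"
  shows "\<forall>z. X *v z = 0 \<longrightarrow> z = 0"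
proof (intro allI impI)
  fix v assume "X *v v = 0"
  then have eq: "\<And>i. (\<Sum>j\<in>UNIV. X$i$j * v$j) = 0" by (simp add: matrix_vector_mult_def vec_eq_iff)
  have dg: "\<And>i. X$i$i = 0"
  proof -
    fix i have "X$i$i = - X$i$i" using sk[of i i] .
    then have "2 * X$i$i = 0" by simp
    then show "X$i$i = 0" by simp
  qed
  have e0: "X$0$1 * v$1 + X$0$2 * v$2 + X$0$3 * v$3 + X$0$4 * v$4 + X$0$5 * v$5 = 0"
    using eq[of 0] by (simp add: sum6 dg)
  have e1: "- X$0$1 * v$0 + X$1$3 * v$3 + X$1$5 * v$5 = 0"
    using eq[of 1] by (simp add: sum6 dg z sk[of 1 0])
  have e2: "- X$0$2 * v$0 + X$2$3 * v$3 = 0"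
    using eq[of 2] by (simp add: sum6 dg z sk[of 2 0] sk[of 2 1])
  have e3: "- X$0$3 * v$0 - X$1$3 * v$1 - X$2$3 * v$2 + X$3$4 * v$4 + X$3$5 * v$5 = 0"
    using eq[of 3] by (simp add: sum6 dg z sk[of 3 0] sk[of 3 1] sk[of 3 2])
  have e4: "- X$0$4 * v$0 - X$3$4 * v$3 = 0"
    using eq[of 4] by (simp add: sum6 dg z sk[of 4 0] sk[of 4 1] sk[of 4 2] sk[of 4 3])
  have e5: "- X$0$5 * v$0 - X$1$5 * v$1 - X$3$5 * v$3 = 0"
    using eq[of 5] by (simp add: sum6 dg z sk[of 5 0] sk[of 5 1] sk[of 5 2] sk[of 5 3] sk[of 5 4])
  have "(X$0$2 * X$3$4 + X$0$4 * X$2$3) * v$0 = - (X$3$4 * (- X$0$2 * v$0 + X$2$3 * v$3) + X$2$3 * (- X$0$4 * v$0 - X$3$4 * v$3))"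
    by (simp add: algebra_simps)
  then have v0: "v$0 = 0" using e2 e4 D by simp
  have "X$2$3 * v$3 = 0" "X$3$4 * v$3 = 0" using e2 e4 v0 by simp_all
  then have v3: "v$3 = 0" using D by auto
  have v5: "v$5 = 0" using e1 v0 v3 n15 by simp
  have v1: "v$1 = 0" using e5 v0 v3 n15 by simp
  have "(X$0$2 * X$3$4 + X$0$4 * X$2$3) * v$2 = X$3$4 * (X$0$2 * v$2 + X$0$4 * v$4) - X$0$4 * (- X$2$3 * v$2 + X$3$4 * v$4)"
    by (simp add: algebra_simps)
  moreover have "X$0$2 * v$2 + X$0$4 * v$4 = 0" using e0 v1 v3 v5 by simp
  moreover have "- X$2$3 * v$2 + X$3$4 * v$4 = 0" using e3 v0 v1 v5 by simp
  ultimately have v2: "v$2 = 0" using D by simp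
  have "(X$0$2 * X$3$4 + X$0$4 * X$2$3) * v$4 = X$2$3 * (X$0$2 * v$2 + X$0$4 * v$4) + X$0$2 * (- X$2$3 * v$2 + X$3$4 * v$4)"
    by (simp add: algebra_simps)
  then have v4: "v$4 = 0" using D \<open>X$0$2 * v$2 + X$0$4 * v$4 = 0\<close> \<open>- X$2$3 * v$2 + X$3$4 * v$4 = 0\<close> by simp
  show "v = 0" using v0 v1 v2 v3 v4 v5 by (simp add: vec_eq_iff all6)
qed


lemma skew_diag: fixes A :: mat6 assumes "\<And>i j. A$j$i = - A$i$j" shows "A$i$i = 0"
proof -
  have "A$i$i = - A$i$i" using assms[of i i] .
  then have "2 * A$i$i = 0" by simp
  then show "A$i$i = 0" by simp
qed

lemma skew_eqI: fixes A B :: mat6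
  assumes sa: "\<And>i j. A$j$i = - A$i$j" and sb: "\<And>i j. B$j$i = - B$i$j"
  and u: "A$0$1 = B$0$1" "A$0$2 = B$0$2" "A$0$3 = B$0$3" "A$0$4 = B$0$4" "A$0$5 = B$0$5"
    "A$1$2 = B$1$2" "A$1$3 = B$1$3" "A$1$4 = B$1$4" "A$1$5 = B$1$5"
    "A$2$3 = B$2$3" "A$2$4 = B$2$4" "A$2$5 = B$2$5" "A$3$4 = B$3$4" "A$3$5 = B$3$5" "A$4$5 = B$4$5"
  shows "A = B"
proof -
  have "\<forall>i j. A$i$j = B$i$j"
    unfolding all6 using sa[of 0 1] sb[of 0 1] sa[of 0 2] sb[of 0 2] sa[of 0 3] sb[of 0 3] sa[of 0 4] sb[of 0 4] sa[of 0 5] sb[of 0 5] sa[of 1 2] sb[of 1 2] sa[of 1 3] sb[of 1 3] sa[of 1 4] sb[of 1 4] sa[of 1 5] sb[of 1 5] sa[of 2 3] sb[of 2 3] sa[of 2 4] sb[of 2 4] sa[of 2 5] sb[of 2 5] sa[of 3 4] sb[of 3 4] sa[of 3 5] sb[of 3 5] sa[of 4 5] sb[of 4 5]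
      skew_diag[OF sa] skew_diag[OF sb] u by simp
  then show ?thesis by (simp add: vec_eq_iff)
qed

lemma wedge_skew: "wedge u v $ j $ i = - wedge u v $ i $ j" by simp

definition X1 :: mat6 where "X1 = wedge (e 0) (e 2) + wedge (e 1) (e 3)"
definition X2 :: mat6 where "X2 = wedge (e 0) (e 4) + wedge (e 1) (e 5)"

definition XX :: "mat6 \<Rightarrow> complex \<Rightarrow> complex \<Rightarrow> complex \<Rightarrow> mat6" where
  "XX N a b c = smat a X1 + smat b X2 + smat c N"

lemma XX_nth: "XX N a b c $ i $ j = a * X1 $ i $ j + b * X2 $ i $ j + c * N $ i $ j"
  by (simp add: XX_def)

lemma X1_nth: "X1 $ i $ j = (if i = 0 \<and> j = 2 then 1 else if i = 2 \<and> j = 0 then -1 else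
   if i = 1 \<and> j = 3 then 1 else if i = 3 \<and> j = 1 then -1 else 0)"
  by (auto simp: X1_def)

lemma X2_nth: "X2 $ i $ j = (if i = 0 \<and> j = 4 then 1 else if i = 4 \<and> j = 0 then -1 else
   if i = 1 \<and> j = 5 then 1 else if i = 5 \<and> j = 1 then -1 else 0)"
  by (auto simp: X2_def)

lemma XX_skew: assumes "\<And>i j. N$j$i = - N$i$j" shows "XX N a b c $ j $ i = - XX N a b c $ i $ j"
  using assms[of i j] by (auto simp: XX_nth X1_nth X2_nth)

lemma XX_in: "XX N a b c \<in> span3 X1 X2 N" unfolding XX_def by (rule span3_memI)

lemma XX_nz: assumes "indep3 X1 X2 N" "c \<noteq> 0" shows "XX N a b c \<noteq> 0"
  using assms unfolding indep3_def XX_def by blast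


lemma c1: assumes sk: "\<And>i j. N$j$i = - N$i$j"
  and bz: "N$1$2 = 0" "N$1$4 = 0" "N$2$4 = 0" "N$2$5 = 0" "N$4$5 = 0" "N$1$5 = 0"
  and R: "R6 (span3 X1 X2 N)"
  shows "N$3$4 = 0"
proof (rule ccontr)
  assume h: "N$3$4 \<noteq> 0"
  define a where "a = - N$0$2 + (1 - (1 + N$0$4) * N$2$3) / N$3$4"
  have "\<forall>z. XX N a 1 1 *v z = 0 \<longrightarrow> z = 0"
  proof (rule inj_cert)
    show "\<And>i j. XX N a 1 1 $ j $ i = - XX N a 1 1 $ i $ j" by (rule XX_skew[OF sk])
    show "XX N a 1 1 $ 1 $ 2 = 0" "XX N a 1 1 $ 1 $ 4 = 0" "XX N a 1 1 $ 2 $ 4 = 0"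
      "XX N a 1 1 $ 2 $ 5 = 0" "XX N a 1 1 $ 4 $ 5 = 0" "XX N a 1 1 $ 1 $ 5 \<noteq> 0"
      by (simp_all add: XX_nth X1_nth X2_nth bz)
    have "XX N a 1 1 $ 0 $ 2 * XX N a 1 1 $ 3 $ 4 + XX N a 1 1 $ 0 $ 4 * XX N a 1 1 $ 2 $ 3
        = (a + N$0$2) * N$3$4 + (1 + N$0$4) * N$2$3"
      by (simp add: XX_nth X1_nth X2_nth)
    also have "\<dots> = 1" using h by (simp add: a_def field_simps)
    finally show "XX N a 1 1 $ 0 $ 2 * XX N a 1 1 $ 3 $ 4 + XX N a 1 1 $ 0 $ 4 * XX N a 1 1 $ 2 $ 3 \<noteq> 0"
      by simp
  qed
  moreover note R[unfolded R6_def]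
  ultimately show False using XX_in by blast
qed

lemma c2: assumes sk: "\<And>i j. N$j$i = - N$i$j"
  and bz: "N$1$2 = 0" "N$1$4 = 0" "N$2$4 = 0" "N$2$5 = 0" "N$4$5 = 0" "N$1$5 = 0"
  and R: "R6 (span3 X1 X2 N)" and n34: "N$3$4 = 0"
  shows "N$2$3 = 0"
proof (rule ccontr)
  assume h: "N$2$3 \<noteq> 0"
  define b where "b = (if N$0$4 = -1 then 2 else (1::complex))"
  have b0: "b \<noteq> 0" and b4: "b + N$0$4 \<noteq> 0" unfolding b_def by (auto simp: add_eq_0_iff)
  have "\<forall>z. XX N 0 b 1 *v z = 0 \<longrightarrow> z = 0"
  proof (rule inj_cert)
    show "\<And>i j. XX N 0 b 1 $ j $ i = - XX N 0 b 1 $ i $ j" by (rule XX_skew[OF sk])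
    show "XX N 0 b 1 $ 1 $ 2 = 0" "XX N 0 b 1 $ 1 $ 4 = 0" "XX N 0 b 1 $ 2 $ 4 = 0"
      "XX N 0 b 1 $ 2 $ 5 = 0" "XX N 0 b 1 $ 4 $ 5 = 0" "XX N 0 b 1 $ 1 $ 5 \<noteq> 0"
      by (simp_all add: XX_nth X1_nth X2_nth bz b0)
    have "XX N 0 b 1 $ 0 $ 2 * XX N 0 b 1 $ 3 $ 4 + XX N 0 b 1 $ 0 $ 4 * XX N 0 b 1 $ 2 $ 3
        = (b + N$0$4) * N$2$3"
      by (simp add: XX_nth X1_nth X2_nth n34)
    then show "XX N 0 b 1 $ 0 $ 2 * XX N 0 b 1 $ 3 $ 4 + XX N 0 b 1 $ 0 $ 4 * XX N 0 b 1 $ 2 $ 3 \<noteq> 0"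
      using h b4 by simp
  qed
  moreover note R[unfolded R6_def]
  ultimately show False using XX_in by blast
qed


definition P1 :: mat6 where "P1 = wedge (e 0) (e 3) + wedge (e 1) (e 2)"
definition P2 :: mat6 where "P2 = wedge (e 0) (e 4) + wedge (e 2) (e 3)"
definition P3 :: mat6 where "P3 = wedge (e 0) (e 5) + wedge (e 1) (e 3)"

lemma plane_p_eq: "plane_p = span3 P1 P2 P3" by (simp add: plane_p_def P1_def P2_def P3_def)

lemma indep_P: "indep3 P1 P2 P3"
  unfolding indep3_def
proof (intro allI impI)
  fix a b c assume h: "smat a P1 + smat b P2 + smat c P3 = 0"
  have "(smat a P1 + smat b P2 + smat c P3) $ 0 $ 3 = 0" "(smat a P1 + smat b P2 + smat c P3) $ 0 $ 4 = 0"
    "(smat a P1 + smat b P2 + smat c P3) $ 0 $ 5 = 0" using h by simp_all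
  then show "a = 0 \<and> b = 0 \<and> c = 0" by (simp add: P1_def P2_def P3_def)
qed

definition colmat :: "(6 \<Rightarrow> vec6) \<Rightarrow> mat6" where "colmat f = (\<chi> i j. f j $ i)"

lemma colmat_e: "colmat f *v e k = f k"
  by (simp add: vec_eq_iff colmat_def matrix_vector_mult_def sum6) (metis exhaust6)

lemma colmat_inv: assumes "\<forall>z. colmat f *v z = 0 \<longrightarrow> z = 0" shows "invertible (colmat f)"
proof -
  have "\<exists>B. B ** colmat f = mat 1" using assms matrix_left_invertible_ker by blast
  then show ?thesis using invertible_left_inverse by blast
qed

lemma colmat_mv: "(colmat f *v z) $ i = f 0 $ i * z$0 + f 1 $ i * z$1 + f 2 $ i * z$2 + f 3 $ i * z$3 + f 4 $ i * z$4 + f 5 $ i * z$5"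
  by (simp add: colmat_def matrix_vector_mult_def sum6)

lemma c3: assumes sk: "\<And>i j. N$j$i = - N$i$j"
  and bz: "N$1$2 = 0" "N$1$4 = 0" "N$2$4 = 0" "N$2$5 = 0" "N$4$5 = 0" "N$1$5 = 0"
  and R: "R2 (span3 X1 X2 N)" and n34: "N$3$4 = 0" and n23: "N$2$3 = 0" and ind: "indep3 X1 X2 N"
  shows "N$3$5 \<noteq> 0"
proof
  assume h: "N$3$5 = 0"
  let ?X = "XX N (- N$1$3) 0 1"
  have "?X = wedge (e 0) (\<chi> k. ?X $ 0 $ k)"
    by (rule skew_eqI[OF XX_skew[OF sk] wedge_skew]) (simp_all add: XX_nth X1_nth X2_nth bz n34 n23 h)
  moreover have "?X \<in> span3 X1 X2 N" by (rule XX_in)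
  ultimately have "?X = 0" using R unfolding R2_def by metis
  then show False using XX_nz[OF ind, of 1] by simp
qed

lemma c4: assumes sk: "\<And>i j. N$j$i = - N$i$j"
  and bz: "N$1$2 = 0" "N$1$4 = 0" "N$2$4 = 0" "N$2$5 = 0" "N$4$5 = 0" "N$1$5 = 0"
  and R: "R2 (span3 X1 X2 N)" and n34: "N$3$4 = 0" and n23: "N$2$3 = 0" and ind: "indep3 X1 X2 N"
  and C: "N$3$5 \<noteq> 0"
  shows "N$0$1 * N$3$5 + N$0$3 * N$0$4 + N$0$5 * (N$1$3 - N$0$2) \<noteq> 0"
proof
  assume k: "N$0$1 * N$3$5 + N$0$3 * N$0$4 + N$0$5 * (N$1$3 - N$0$2) = 0"
  then have k': "N$0$1 = - (N$0$3 * N$0$4 + N$0$5 * (N$1$3 - N$0$2)) / N$3$5"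
    using C by (simp add: field_simps add_eq_0_iff)
  let ?X = "XX N (- N$0$2) (- N$0$4) 1"
  define p where "p = (- N$0$4 / N$3$5) *s e 1 + e 3 + (N$0$5 / N$3$5) *s e 0"
  define q where "q = N$3$5 *s e 5 - (N$1$3 - N$0$2) *s e 1 - N$0$3 *s e 0"
  have "?X = wedge p q"
    by (rule skew_eqI[OF XX_skew[OF sk] wedge_skew])
      (simp_all add: XX_nth X1_nth X2_nth bz n34 n23 p_def q_def k' C field_simps)
  moreover have "?X \<in> span3 X1 X2 N" by (rule XX_in)
  ultimately have "?X = 0" using R unfolding R2_def by metis
  then show False using XX_nz[OF ind, of 1] by simp
qed


lemma core: assumes sk: "\<And>i j. N$j$i = - N$i$j"
  and bz: "N$1$2 = 0" "N$1$4 = 0" "N$2$4 = 0" "N$2$5 = 0" "N$4$5 = 0" "N$1$5 = 0"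
  and R2: "R2 (span3 X1 X2 N)" and R6: "R6 (span3 X1 X2 N)" and ind: "indep3 X1 X2 N"
  shows "\<exists>F. invertible F \<and> act F plane_p = span3 X1 X2 N"
proof -
  have n34: "N$3$4 = 0" by (rule c1[OF sk bz R6])
  have n23: "N$2$3 = 0" by (rule c2[OF sk bz R6 n34])
  have C: "N$3$5 \<noteq> 0" by (rule c3[OF sk bz R2 n34 n23 ind])
  have K: "N$0$1 * N$3$5 + N$0$3 * N$0$4 + N$0$5 * (N$1$3 - N$0$2) \<noteq> 0" by (rule c4[OF sk bz R2 n34 n23 ind C])
  define c where "c = N$3$5"
  define a where "a = N$1$3 - N$0$2"
  define b where "b = - N$0$4"
  define k where "k = N$0$1 * N$3$5 + N$0$3 * N$0$4 + N$0$5 * (N$1$3 - N$0$2)"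
  have c0: "c \<noteq> 0" using C c_def by simp
  have k0: "k \<noteq> 0" using K k_def by simp
  define f1 where "f1 = (b / c) *s e 1 + e 3"
  define f2 where "f2 = (- a) *s e 1 + c *s e 5"
  define f3 where "f3 = N$0$1 *s e 1 + N$0$3 *s e 3 + N$0$5 *s e 5"
  define f4 where "f4 = (- N$0$3 * N$0$1) *s e 1 + (- N$0$3 * N$0$3) *s e 3 + (- k) *s e 4 + (- N$0$3 * N$0$5) *s e 5"
  define f5 where "f5 = (N$0$5 * N$0$1 / c) *s e 1 + (- k / c) *s e 2 + (N$0$5 * N$0$3 / c) *s e 3 + (N$0$5 * N$0$5 / c) *s e 5"
  define fs where "fs = (\<lambda>j::6. if j = 0 then e 0 else if j = 1 then f1 else if j = 2 then f2 else
     if j = 3 then f3 else if j = 4 then f4 else f5)"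
  define F where "F = colmat fs"
  have Fe: "F *v e 0 = e 0" "F *v e 1 = f1" "F *v e 2 = f2" "F *v e 3 = f3" "F *v e 4 = f4" "F *v e 5 = f5"
    unfolding F_def colmat_e fs_def by simp_all
  have inj: "\<forall>z. F *v z = 0 \<longrightarrow> z = 0"
  proof (intro allI impI)
    fix z assume "F *v z = 0"
    then have h: "\<And>i. (F *v z) $ i = 0" by simp
    have h0: "z$0 = 0" using h[of 0] unfolding F_def colmat_mv
      by (simp add: fs_def f1_def f2_def f3_def f4_def f5_def)
    have h2: "- k / c * z$5 = 0" using h[of 2] unfolding F_def colmat_mv
      by (simp add: fs_def f1_def f2_def f3_def f4_def f5_def)
    then have z5: "z$5 = 0" using k0 c0 by simp
    have h4: "- k * z$4 = 0" using h[of 4] unfolding F_def colmat_mv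
      by (simp add: fs_def f1_def f2_def f3_def f4_def f5_def)
    then have z4: "z$4 = 0" using k0 by simp
    have h3: "z$1 + N$0$3 * z$3 = 0" using h[of 3] z4 z5 unfolding F_def colmat_mv
      by (simp add: fs_def f1_def f2_def f3_def f4_def f5_def)
    have h5: "c * z$2 + N$0$5 * z$3 = 0" using h[of 5] z4 z5 unfolding F_def colmat_mv
      by (simp add: fs_def f1_def f2_def f3_def f4_def f5_def)
    have h1: "b / c * z$1 - a * z$2 + N$0$1 * z$3 = 0" using h[of 1] z4 z5 unfolding F_def colmat_mv
      by (simp add: fs_def f1_def f2_def f3_def f4_def f5_def)
    have z1: "z$1 = - N$0$3 * z$3" using h3 by (simp add: add_eq_0_iff)
    have z2: "z$2 = - N$0$5 * z$3 / c" using h5 c0 by (simp add: field_simps add_eq_0_iff)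
    have "k / c * z$3 = 0" using h1 unfolding z1 z2 k_def a_def b_def c_def using c0 C
      by (simp add: field_simps)
    then have z3: "z$3 = 0" using k0 c0 by simp
    have "z$1 = 0" "z$2 = 0" using z1 z2 z3 by simp_all
    then show "z = 0" using h0 z3 z4 z5 by (simp add: vec_eq_iff all6)
  qed
  have invF: "invertible F" unfolding F_def by (rule colmat_inv) (use inj F_def in simp)
  obtain H where H: "H ** F = mat 1" using invF invertible_left_inverse by blast
  have E1: "F ** P1 ** transpose F = XX N (- N$0$2) (- N$0$4) 1"
    unfolding P1_def act_add act_wedge Fe
    by (rule skew_eqI[OF _ XX_skew[OF sk]])
      (simp_all add: XX_nth X1_nth X2_nth bz n34 n23 f1_def f2_def f3_def f4_def f5_def a_def b_def c_def C field_simps)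
  have E2: "F ** P2 ** transpose F = XX N (- a * N$0$3 + N$0$3 * N$1$3) (- c * N$0$1 - a * N$0$5) (- N$0$3)"
    unfolding P2_def act_add act_wedge Fe
    by (rule skew_eqI[OF _ XX_skew[OF sk]])
      (simp_all add: XX_nth X1_nth X2_nth bz n34 n23 f1_def f2_def f3_def f4_def f5_def a_def b_def c_def k_def C field_simps)
  have E3: "F ** P3 ** transpose F = XX N (- N$0$1 + b * N$0$3 / c - N$0$5 * N$1$3 / c) (b * N$0$5 / c) (N$0$5 / c)"
    unfolding P3_def act_add act_wedge Fe
    by (rule skew_eqI[OF _ XX_skew[OF sk]])
      (simp_all add: XX_nth X1_nth X2_nth bz n34 n23 f1_def f2_def f3_def f4_def f5_def a_def b_def c_def k_def C field_simps)
  have "act F plane_p = span3 (F ** P1 ** transpose F) (F ** P2 ** transpose F) (F ** P3 ** transpose F)"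
    unfolding plane_p_eq act_span3 ..
  also have "\<dots> = span3 X1 X2 N"
  proof (rule span3_eq)
    show "F ** P1 ** transpose F \<in> span3 X1 X2 N" unfolding E1 by (rule XX_in)
    show "F ** P2 ** transpose F \<in> span3 X1 X2 N" unfolding E2 by (rule XX_in)
    show "F ** P3 ** transpose F \<in> span3 X1 X2 N" unfolding E3 by (rule XX_in)
    show "indep3 (F ** P1 ** transpose F) (F ** P2 ** transpose F) (F ** P3 ** transpose F)"
      by (rule indep3_act[OF H indep_P])
  qed
  finally show ?thesis using invF by blast
qed


lemma q4_block: fixes Y :: mat6
  assumes "\<And>i j k l. q4 Y (e 0) (e 3) i j k l = 0"
  shows "Y$1$2 = 0 \<and> Y$1$4 = 0 \<and> Y$2$4 = 0 \<and> Y$2$5 = 0 \<and> Y$4$5 = 0 \<and> Y$1$5 = 0"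
  using assms[of 1 2 0 3] assms[of 1 4 0 3] assms[of 2 4 0 3] assms[of 2 5 0 3] assms[of 4 5 0 3] assms[of 1 5 0 3]
  by (simp add: q4_def pl_def)

lemma frame2: assumes Q: "Q = span3 A B C" "indep3 A B C" and R2: "R2 Q" and R6: "R6 Q" and SK: "SK Q"
  and X: "X1 \<in> Q" "X2 \<in> Q" and Y: "Y1 \<in> Q" "Y2 \<in> Q" "indep2 Y1 Y2"
  and bz: "\<And>Y. Y \<in> {Y1, Y2} \<Longrightarrow> Y$1$2 = 0 \<and> Y$1$4 = 0 \<and> Y$2$4 = 0 \<and> Y$2$5 = 0 \<and> Y$4$5 = 0 \<and> Y$1$5 = 0"
  shows "\<exists>F. invertible F \<and> act F plane_p = Q"
proof -
  have "\<exists>N\<in>{Y1, Y2}. \<forall>\<alpha> \<beta>. N \<noteq> smat \<alpha> X1 + smat \<beta> X2"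
  proof (rule ccontr)
    assume "\<not> ?thesis"
    then obtain a1 b1 a2 b2 where y1: "Y1 = smat a1 X1 + smat b1 X2" and y2: "Y2 = smat a2 X1 + smat b2 X2" by auto
    have "Y1$1$5 = 0" "Y2$1$5 = 0" using bz by auto
    then have b: "b1 = 0" "b2 = 0" unfolding y1 y2 by (simp_all add: X1_nth X2_nth)
    have "smat a2 Y1 + smat (- a1) Y2 = 0" unfolding y1 y2 b by (simp add: vec_eq_iff)
    then have "a2 = 0 \<and> - a1 = 0" using Y(3) unfolding indep2_def by blast
    then have "a2 = 0" "a1 = 0" by simp_all
    then have "smat 1 Y1 + smat 0 Y2 = 0" unfolding y1 b by (simp add: vec_eq_iff)
    then have "(1::complex) = 0 \<and> (0::complex) = 0" using Y(3) unfolding indep2_def by blast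
    then show False by simp
  qed
  then obtain N where N: "N \<in> {Y1, Y2}" and nN: "\<And>\<alpha> \<beta>. N \<noteq> smat \<alpha> X1 + smat \<beta> X2" by blast
  have NQ: "N \<in> Q" using N Y by auto
  have ind: "indep3 X1 X2 N"
    unfolding indep3_def
  proof (intro allI impI)
    fix a b c assume h: "smat a X1 + smat b X2 + smat c N = 0"
    have c: "c = 0"
    proof (rule ccontr)
      assume c: "c \<noteq> 0"
      have "N = smat (- a / c) X1 + smat (- b / c) X2"
      proof -
        have "\<And>i j. a * X1$i$j + b * X2$i$j + c * N$i$j = 0" using h by (simp add: vec_eq_iff)
        then have "\<And>i j. N$i$j = - a / c * X1$i$j + - b / c * X2$i$j"
          using c by (simp add: field_simps add_eq_0_iff)
        then show ?thesis by (simp add: vec_eq_iff)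
      qed
      then show False using nN by blast
    qed
    have "(smat a X1 + smat b X2 + smat c N) $ 0 $ 2 = 0" "(smat a X1 + smat b X2 + smat c N) $ 0 $ 4 = 0"
      using h by simp_all
    then have "a = 0" "b = 0" using c by (simp_all add: X1_nth X2_nth)
    then show "a = 0 \<and> b = 0 \<and> c = 0" using c by simp
  qed
  have QN: "Q = span3 X1 X2 N" using span3_eq[of X1 A B C X2 N] X NQ ind Q by simp
  have sk: "\<And>i j. N$j$i = - N$i$j" using SK NQ unfolding SK_def by blast
  have bzN: "N$1$2 = 0" "N$1$4 = 0" "N$2$4 = 0" "N$2$5 = 0" "N$4$5 = 0" "N$1$5 = 0" using bz[OF N] by auto
  show ?thesis using core[OF sk bzN, folded QN, OF R2 R6 ind] .
qed


definition sp2 :: "vec6 \<Rightarrow> vec6 \<Rightarrow> vec6 set" where "sp2 u w = {c *s u + d *s w | c d. True}"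
definition indepv :: "vec6 \<Rightarrow> vec6 \<Rightarrow> bool" where
  "indepv u w \<longleftrightarrow> (\<forall>a b. a *s u + b *s w = 0 \<longrightarrow> a = 0 \<and> b = 0)"

lemma sub2_iff: "sub2 W \<longleftrightarrow> (\<exists>u w. indepv u w \<and> W = sp2 u w)"
  unfolding sub2_def indepv_def sp2_def ..

lemma sp2_closed: assumes "x \<in> sp2 u w" "y \<in> sp2 u w" shows "\<alpha> *s x + \<beta> *s y \<in> sp2 u w"
proof -
  obtain c1 d1 where x: "x = c1 *s u + d1 *s w" using assms(1) unfolding sp2_def by blast
  obtain c2 d2 where y: "y = c2 *s u + d2 *s w" using assms(2) unfolding sp2_def by blast
  have "\<alpha> *s x + \<beta> *s y = (\<alpha> * c1 + \<beta> * c2) *s u + (\<alpha> * d1 + \<beta> * d2) *s w"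
    unfolding x y by (simp add: vec_eq_iff algebra_simps)
  then show ?thesis unfolding sp2_def by blast
qed

lemma sp2_u: "u \<in> sp2 u w"
proof -
  have "u = 1 *s u + 0 *s w" by (simp add: vec_eq_iff)
  then show ?thesis unfolding sp2_def by blast
qed
lemma sp2_w: "w \<in> sp2 u w"
proof -
  have "w = 0 *s u + 1 *s w" by (simp add: vec_eq_iff)
  then show ?thesis unfolding sp2_def by blast
qed

lemma pl_anti: "pl u w j i = - pl u w i j" by (simp add: pl_def)
lemma pl_diag: "pl u w i i = 0" by (simp add: pl_def)

lemma pl_nz: assumes "indepv u w" shows "\<exists>i j. pl u w i j \<noteq> 0"
proof (rule ccontr)
  assume "\<not> ?thesis"
  then have z: "\<And>i j. u$i * w$j - u$j * w$i = 0" unfolding pl_def by auto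
  show False
  proof (cases "u = 0")
    case True
    then have "1 *s u + 0 *s w = 0" by simp
    then show False using assms unfolding indepv_def by (metis one_neq_zero)
  next
    case False
    then obtain k where k: "u$k \<noteq> 0" by (metis vec_eq_iff zero_index)
    have "(w$k) *s u + (- u$k) *s w = 0"
      using z[of k] by (simp add: vec_eq_iff) 
    then show False using assms k unfolding indepv_def by (metis neg_equal_0_iff_equal)
  qed
qed

lemma std_pivot: assumes "X1 \<in> wedgeV (sp2 u w)" "X2 \<in> wedgeV (sp2 u w)" "indepv u w"
  shows "u$2 = 0 \<and> u$3 = 0 \<and> u$4 = 0 \<and> u$5 = 0 \<and> w$2 = 0 \<and> w$3 = 0 \<and> w$4 = 0 \<and> w$5 = 0 \<and> pl u w 0 1 \<noteq> 0"
proof -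
  have uw: "u \<in> sp2 u w" "w \<in> sp2 u w" by (rule sp2_u, rule sp2_w)
  have q1: "\<And>i j k l. q4 X1 u w i j k l = 0" using q4_wedgeV[OF assms(1)[unfolded sp2_def]] uw unfolding sp2_def by blast
  have q2: "\<And>i j k l. q4 X2 u w i j k l = 0" using q4_wedgeV[OF assms(2)[unfolded sp2_def]] uw unfolding sp2_def by blast
  have z: "pl u w 1 4 = 0" "pl u w 1 5 = 0" "pl u w 3 4 = 0" "pl u w 3 5 = 0" "pl u w 4 5 = 0"
    "pl u w 0 4 = 0" "pl u w 0 5 = 0" "pl u w 2 4 = 0" "pl u w 2 5 = 0"
    "pl u w 1 2 = 0" "pl u w 1 3 = 0" "pl u w 2 3 = 0" "pl u w 0 2 = 0" "pl u w 0 3 = 0"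
    using q1[of 0 2 1 4] q1[of 0 2 1 5] q1[of 0 2 3 4] q1[of 0 2 3 5] q1[of 0 2 4 5]
      q1[of 1 3 0 4] q1[of 1 3 0 5] q1[of 1 3 2 4] q1[of 1 3 2 5]
      q2[of 0 4 1 2] q2[of 0 4 1 3] q2[of 0 4 2 3] q2[of 1 5 0 2] q2[of 1 5 0 3]
    by (simp_all add: q4_def X1_nth X2_nth pl_diag)
  have nz: "pl u w 0 1 \<noteq> 0"
  proof
    assume h: "pl u w 0 1 = 0"
    have "\<forall>i j. pl u w i j = 0"
      unfolding all6 using z h pl_diag[of u w] pl_anti[of u w 1 0] pl_anti[of u w 2 0] pl_anti[of u w 3 0]
        pl_anti[of u w 4 0] pl_anti[of u w 5 0] pl_anti[of u w 2 1] pl_anti[of u w 3 1] pl_anti[of u w 4 1]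
        pl_anti[of u w 5 1] pl_anti[of u w 3 2] pl_anti[of u w 4 2] pl_anti[of u w 5 2] pl_anti[of u w 4 3]
        pl_anti[of u w 5 3] pl_anti[of u w 5 4]
      by simp
    then show False using pl_nz[OF assms(3)] by blast
  qed
  have idu: "\<And>k. u$k * pl u w 0 1 = u$0 * (- pl u w 1 k) + u$1 * pl u w 0 k"
    by (simp add: pl_def algebra_simps)
  have idw: "\<And>k. w$k * pl u w 0 1 = w$0 * (- pl u w 1 k) + w$1 * pl u w 0 k"
    by (simp add: pl_def algebra_simps)
  have "u$2 * pl u w 0 1 = 0" "u$3 * pl u w 0 1 = 0" "u$4 * pl u w 0 1 = 0" "u$5 * pl u w 0 1 = 0"
    "w$2 * pl u w 0 1 = 0" "w$3 * pl u w 0 1 = 0" "w$4 * pl u w 0 1 = 0" "w$5 * pl u w 0 1 = 0"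
    unfolding idu idw using z by simp_all
  then show ?thesis using nz by simp
qed

definition Wstd :: "vec6 set" where "Wstd = {x. x$2 = 0 \<and> x$3 = 0 \<and> x$4 = 0 \<and> x$5 = 0}"

lemma sp2_std: assumes "u$2 = 0 \<and> u$3 = 0 \<and> u$4 = 0 \<and> u$5 = 0 \<and> w$2 = 0 \<and> w$3 = 0 \<and> w$4 = 0 \<and> w$5 = 0"
  and "pl u w 0 1 \<noteq> 0"
  shows "sp2 u w = Wstd"
proof
  show "sp2 u w \<subseteq> Wstd" using assms(1) unfolding sp2_def Wstd_def by auto
next
  show "Wstd \<subseteq> sp2 u w"
  proof
    fix x assume x: "x \<in> Wstd"
    obtain d where dd: "d = u$0 * w$1 - u$1 * w$0" by blast
    have d: "d \<noteq> 0" using assms(2) dd unfolding pl_def by simp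
    define a where "a = (x$0 * w$1 - x$1 * w$0) / d"
    define b where "b = (u$0 * x$1 - u$1 * x$0) / d"
    have c0: "a * u$0 + b * w$0 = x$0 * (u$0 * w$1 - u$1 * w$0) / d" unfolding a_def b_def using d
      by (simp add: field_simps)
    have c1: "a * u$1 + b * w$1 = x$1 * (u$0 * w$1 - u$1 * w$0) / d" unfolding a_def b_def using d
      by (simp add: field_simps)
    have "x = a *s u + b *s w"
    proof -
      have "\<forall>i. x$i = (a *s u + b *s w) $ i"
        unfolding all6 using x assms(1) d c0 c1 unfolding Wstd_def dd[symmetric] by simp
      then show ?thesis by (simp add: vec_eq_iff)
    qed
    then show "x \<in> sp2 u w" unfolding sp2_def by blast
  qed
qed

lemma tail_nz_sp2: assumes "indepv u w" "sp2 u w \<noteq> Wstd" "pl u w 0 1 \<noteq> 0 \<or> True"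
  shows "\<exists>q\<in>sp2 u w. q$2 \<noteq> 0 \<or> q$3 \<noteq> 0 \<or> q$4 \<noteq> 0 \<or> q$5 \<noteq> 0"
proof (rule ccontr)
  assume "\<not> ?thesis"
  then have t: "\<forall>q\<in>sp2 u w. q$2 = 0 \<and> q$3 = 0 \<and> q$4 = 0 \<and> q$5 = 0" by blast
  have uw: "u \<in> sp2 u w" "w \<in> sp2 u w" by (rule sp2_u, rule sp2_w)
  have tz: "u$2 = 0 \<and> u$3 = 0 \<and> u$4 = 0 \<and> u$5 = 0 \<and> w$2 = 0 \<and> w$3 = 0 \<and> w$4 = 0 \<and> w$5 = 0"
    using t uw by blast
  obtain i j where ij: "pl u w i j \<noteq> 0" using pl_nz[OF assms(1)] by blast
  have "pl u w 0 1 \<noteq> 0"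
  proof
    assume h: "pl u w 0 1 = 0"
    have "\<forall>i j. pl u w i j = 0" unfolding all6 using tz h by (simp add: pl_def algebra_simps)
    then show False using ij by blast
  qed
  then have "sp2 u w = Wstd" using sp2_std tz by blast
  then show False using assms(2) by blast
qed


lemma X1_act: "G ** X1 ** transpose G = wedge (G *v e 0) (G *v e 2) + wedge (G *v e 1) (G *v e 3)"
  unfolding X1_def act_add act_wedge ..
lemma X2_act: "G ** X2 ** transpose G = wedge (G *v e 0) (G *v e 4) + wedge (G *v e 1) (G *v e 5)"
  unfolding X2_def act_add act_wedge ..
lemma comb_skew: "(smat a X1 + smat b X2) $ j $ i = - (smat a X1 + smat b X2) $ i $ j"
  by (auto simp: X1_nth X2_nth)
lemma wedge2_skew: "(wedge u v + wedge w x) $ j $ i = - (wedge u v + wedge w x) $ i $ j"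
  by simp

lemma G2_lemma: fixes p0 p1 s0 s1 a b c d q0 q1 l :: complex
  assumes D: "p0 * s1 - p1 * s0 \<noteq> 0" and E: "a * d - b * c \<noteq> 0" and L: "l \<noteq> 0"
  shows "\<exists>G. invertible G \<and> G ** X1 ** transpose G = smat a X1 + smat b X2
     \<and> G ** X2 ** transpose G = smat c X1 + smat d X2
     \<and> G *v e 0 = p0 *s e 0 + p1 *s e 1
     \<and> (\<exists>\<nu> \<mu>. \<mu> \<noteq> 0 \<and> G *v (\<nu> *s e 0 + \<mu> *s e 3) =
           q0 *s e 0 + q1 *s e 1 + l *s ((- p1 * a) *s e 2 + (p0 * a) *s e 3 + (- p1 * b) *s e 4 + (p0 * b) *s e 5))"
proof -
  define D' where "D' = p0 * s1 - p1 * s0"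
  have D0: "D' \<noteq> 0" using D D'_def by simp
  define k where "k = (p0 * q1 - p1 * q0) / (l * D' * D')"
  define f0 where "f0 = p0 *s e 0 + p1 *s e 1"
  define f1 where "f1 = s0 *s e 0 + s1 *s e 1"
  define f2 where "f2 = (a * s1 / D') *s e 2 + (- a * s0 / D') *s e 3 + (b * s1 / D') *s e 4 + (- b * s0 / D') *s e 5"
  define f3 where "f3 = (k * s0) *s e 0 + (k * s1) *s e 1 + (- p1 * a / D') *s e 2 + (p0 * a / D') *s e 3 + (- p1 * b / D') *s e 4 + (p0 * b / D') *s e 5"
  define f4 where "f4 = (c * s1 / D') *s e 2 + (- c * s0 / D') *s e 3 + (d * s1 / D') *s e 4 + (- d * s0 / D') *s e 5"
  define f5 where "f5 = (- p1 * c / D') *s e 2 + (p0 * c / D') *s e 3 + (- p1 * d / D') *s e 4 + (p0 * d / D') *s e 5"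
  define fs where "fs = (\<lambda>j::6. if j = 0 then f0 else if j = 1 then f1 else if j = 2 then f2 else
     if j = 3 then f3 else if j = 4 then f4 else f5)"
  define G where "G = colmat fs"
  have Ge: "G *v e 0 = f0" "G *v e 1 = f1" "G *v e 2 = f2" "G *v e 3 = f3" "G *v e 4 = f4" "G *v e 5 = f5"
    unfolding G_def colmat_e fs_def by simp_all
  have inj: "\<forall>z. G *v z = 0 \<longrightarrow> z = 0"
  proof (intro allI impI)
    fix z assume "G *v z = 0"
    then have h: "\<And>i. (G *v z) $ i = 0" by simp
    have e0: "p0 * z$0 + s0 * z$1 + k * s0 * z$3 = 0" using h[of 0] unfolding G_def colmat_mv
      by (simp add: fs_def f0_def f1_def f2_def f3_def f4_def f5_def algebra_simps)
    have e1: "p1 * z$0 + s1 * z$1 + k * s1 * z$3 = 0" using h[of 1] unfolding G_def colmat_mv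
      by (simp add: fs_def f0_def f1_def f2_def f3_def f4_def f5_def algebra_simps)
    have r2: "(G *v z) $ 2 = (s1 * (a * z$2 + c * z$4) - p1 * (a * z$3 + c * z$5)) / D'" unfolding G_def colmat_mv
      by (simp add: fs_def f0_def f1_def f2_def f3_def f4_def f5_def add_divide_distrib diff_divide_distrib algebra_simps)
    have e2: "s1 * (a * z$2 + c * z$4) - p1 * (a * z$3 + c * z$5) = 0" using h[of 2] D0 unfolding r2 by simp
    have r3: "(G *v z) $ 3 = (- s0 * (a * z$2 + c * z$4) + p0 * (a * z$3 + c * z$5)) / D'" unfolding G_def colmat_mv
      by (simp add: fs_def f0_def f1_def f2_def f3_def f4_def f5_def add_divide_distrib diff_divide_distrib algebra_simps)
    have e3: "- s0 * (a * z$2 + c * z$4) + p0 * (a * z$3 + c * z$5) = 0" using h[of 3] D0 unfolding r3 by simp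
    have r4: "(G *v z) $ 4 = (s1 * (b * z$2 + d * z$4) - p1 * (b * z$3 + d * z$5)) / D'" unfolding G_def colmat_mv
      by (simp add: fs_def f0_def f1_def f2_def f3_def f4_def f5_def add_divide_distrib diff_divide_distrib algebra_simps)
    have e4: "s1 * (b * z$2 + d * z$4) - p1 * (b * z$3 + d * z$5) = 0" using h[of 4] D0 unfolding r4 by simp
    have r5: "(G *v z) $ 5 = (- s0 * (b * z$2 + d * z$4) + p0 * (b * z$3 + d * z$5)) / D'" unfolding G_def colmat_mv
      by (simp add: fs_def f0_def f1_def f2_def f3_def f4_def f5_def add_divide_distrib diff_divide_distrib algebra_simps)
    have e5: "- s0 * (b * z$2 + d * z$4) + p0 * (b * z$3 + d * z$5) = 0" using h[of 5] D0 unfolding r5 by simp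
    have elim: "\<And>x y. s1 * x - p1 * y = 0 \<Longrightarrow> - s0 * x + p0 * y = 0 \<Longrightarrow> x = 0 \<and> y = 0"
    proof -
      fix x y assume h1: "s1 * x - p1 * y = 0" and h2: "- s0 * x + p0 * y = 0"
      have "D' * x = p0 * (s1 * x - p1 * y) + p1 * (- s0 * x + p0 * y)" unfolding D'_def by (simp add: algebra_simps)
      then have x: "x = 0" using h1 h2 D0 by simp
      have "D' * y = s0 * (s1 * x - p1 * y) + s1 * (- s0 * x + p0 * y)" unfolding D'_def by (simp add: algebra_simps)
      then have "y = 0" using h1 h2 D0 by simp
      then show "x = 0 \<and> y = 0" using x by simp
    qed
    have al: "a * z$2 + c * z$4 = 0" "a * z$3 + c * z$5 = 0" using elim[OF e2 e3] by simp_all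
    have ga: "b * z$2 + d * z$4 = 0" "b * z$3 + d * z$5 = 0" using elim[OF e4 e5] by simp_all
    have "(a * d - b * c) * z$2 = d * (a * z$2 + c * z$4) - c * (b * z$2 + d * z$4)" by (simp add: algebra_simps)
    then have z2: "z$2 = 0" using al ga E by simp
    have "(a * d - b * c) * z$4 = a * (b * z$2 + d * z$4) - b * (a * z$2 + c * z$4)" by (simp add: algebra_simps)
    then have z4: "z$4 = 0" using al ga E by simp
    have "(a * d - b * c) * z$3 = d * (a * z$3 + c * z$5) - c * (b * z$3 + d * z$5)" by (simp add: algebra_simps)
    then have z3: "z$3 = 0" using al ga E by simp
    have "(a * d - b * c) * z$5 = a * (b * z$3 + d * z$5) - b * (a * z$3 + c * z$5)" by (simp add: algebra_simps)
    then have z5: "z$5 = 0" using al ga E by simp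
    have "D' * z$0 = s1 * (p0 * z$0 + s0 * z$1 + k * s0 * z$3) - s0 * (p1 * z$0 + s1 * z$1 + k * s1 * z$3)"
      unfolding D'_def by (simp add: algebra_simps)
    then have z0: "z$0 = 0" using e0 e1 D0 by simp
    have "D' * z$1 = p0 * (p1 * z$0 + s1 * z$1 + k * s1 * z$3) - p1 * (p0 * z$0 + s0 * z$1 + k * s0 * z$3)"
      using z3 unfolding D'_def by (simp add: algebra_simps)
    then have z1: "z$1 = 0" using e0 e1 D0 by simp
    show "z = 0" using z0 z1 z2 z3 z4 z5 by (simp add: vec_eq_iff all6)
  qed
  have rid: "\<And>x. x * (p0 * s1) / (p0 * s1 - p1 * s0) = x + x * (p1 * s0) / (p0 * s1 - p1 * s0)"
  proof -
    fix x :: complex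
    have "x * (p0 * s1) = x * (p0 * s1 - p1 * s0) + x * (p1 * s0)" by (simp add: algebra_simps)
    then show "x * (p0 * s1) / (p0 * s1 - p1 * s0) = x + x * (p1 * s0) / (p0 * s1 - p1 * s0)"
      using D by (simp add: add_divide_distrib)
  qed
  have invG: "invertible G" unfolding G_def by (rule colmat_inv) (use inj G_def in simp)
  have M1: "G ** X1 ** transpose G = smat a X1 + smat b X2"
    unfolding X1_act Ge
    by (rule skew_eqI[OF wedge2_skew comb_skew])
      (simp_all add: X1_nth X2_nth f0_def f1_def f2_def f3_def f4_def f5_def D D'_def field_simps, simp_all add: rid)
  have M2: "G ** X2 ** transpose G = smat c X1 + smat d X2"
    unfolding X2_act Ge
    by (rule skew_eqI[OF wedge2_skew comb_skew])
      (simp_all add: X1_nth X2_nth f0_def f1_def f2_def f3_def f4_def f5_def D D'_def field_simps, simp_all add: rid)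
  have Q: "G *v (((q0 * s1 - q1 * s0) / D') *s e 0 + (l * D') *s e 3) =
           q0 *s e 0 + q1 *s e 1 + l *s ((- p1 * a) *s e 2 + (p0 * a) *s e 3 + (- p1 * b) *s e 4 + (p0 * b) *s e 5)"
  proof -
    have "G *v (((q0 * s1 - q1 * s0) / D') *s e 0 + (l * D') *s e 3) = ((q0 * s1 - q1 * s0) / D') *s f0 + (l * D') *s f3"
      by (simp add: mv_lin Ge)
    also have "\<dots> = q0 *s e 0 + q1 *s e 1 + l *s ((- p1 * a) *s e 2 + (p0 * a) *s e 3 + (- p1 * b) *s e 4 + (p0 * b) *s e 5)"
      unfolding vec_eq_iff all6 using D0 L
      by (simp add: f0_def f3_def k_def field_simps) (simp add: D'_def algebra_simps)
    finally show ?thesis .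
  qed
  have "l * D' \<noteq> 0" using L D0 by simp
  then show ?thesis using invG M1 M2 Q Ge(1) f0_def by blast
qed


lemma q4_lin: "q4 (smat x A + smat y B) a b i j k l = x * q4 A a b i j k l + y * q4 B a b i j k l"
  by (simp add: q4_def algebra_simps)

lemma lin4_eq: fixes A B C D :: mat6
  assumes "smat c1 A + smat c2 B + smat c3 C + smat c4 D = 0"
  shows "smat c1 A + smat c2 B = smat (- c3) C + smat (- c4) D"
proof -
  have h: "\<And>i j. c1 * A$i$j + c2 * B$i$j + c3 * C$i$j + c4 * D$i$j = 0" using assms by (simp add: vec_eq_iff)
  have "\<And>i j. c1 * A$i$j + c2 * B$i$j = - c3 * C$i$j + - c4 * D$i$j"
  proof -
    fix i j
    have "c1 * A$i$j + c2 * B$i$j + (c3 * C$i$j + c4 * D$i$j) = 0" using h[of i j] by (simp add: add.assoc)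
    then have "c1 * A$i$j + c2 * B$i$j = - (c3 * C$i$j + c4 * D$i$j)" by (subst eq_neg_iff_add_eq_0)
    then show "c1 * A$i$j + c2 * B$i$j = - c3 * C$i$j + - c4 * D$i$j" by simp
  qed
  then show ?thesis by (simp add: vec_eq_iff)
qed

lemma frame1:
  assumes PP: "P = span3 A B C" "indep3 A B C" and R2: "R2 P" and R6: "R6 P" and SK: "SK P"
    and X: "X1 \<in> P" "X2 \<in> P"
    and W1: "X1 \<in> wedgeV (sp2 u1 w1)" "X2 \<in> wedgeV (sp2 u1 w1)" "indepv u1 w1"
    and Y: "Y1 \<in> P" "Y2 \<in> P" "indep2 Y1 Y2"
    and W2: "Y1 \<in> wedgeV (sp2 u2 w2)" "Y2 \<in> wedgeV (sp2 u2 w2)" "indepv u2 w2"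
    and neq: "sp2 u1 w1 \<noteq> sp2 u2 w2" and p: "p \<noteq> 0" "p \<in> sp2 u1 w1" "p \<in> sp2 u2 w2"
  shows "\<exists>F. invertible F \<and> act F plane_p = P"
proof -
  have sp1: "sp2 u1 w1 = Wstd" using std_pivot[OF W1] sp2_std by blast
  have ptail: "p$2 = 0" "p$3 = 0" "p$4 = 0" "p$5 = 0" using p(2) unfolding sp1 Wstd_def by auto
  have p01: "p$0 \<noteq> 0 \<or> p$1 \<noteq> 0"
  proof (rule ccontr)
    assume "\<not> ?thesis"
    then have "p = 0" using ptail by (simp add: vec_eq_iff all6)
    then show False using p(1) by simp
  qed
  have "sp2 u2 w2 \<noteq> Wstd" using neq sp1 by simp
  then obtain q where q: "q \<in> sp2 u2 w2" "q$2 \<noteq> 0 \<or> q$3 \<noteq> 0 \<or> q$4 \<noteq> 0 \<or> q$5 \<noteq> 0"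
    using tail_nz_sp2[OF W2(3)] by blast
  have XP: "X1 \<in> span3 A B C" "X2 \<in> span3 A B C" "Y1 \<in> span3 A B C" "Y2 \<in> span3 A B C"
    using X Y PP by auto
  obtain c1 c2 c3 c4 where c: "c1 \<noteq> 0 \<or> c2 \<noteq> 0 \<or> c3 \<noteq> 0 \<or> c4 \<noteq> 0"
    "smat c1 X1 + smat c2 X2 + smat c3 Y1 + smat c4 Y2 = 0"
    using dep4_mat[OF XP] by (elim exE conjE)
  have Meq: "smat c1 X1 + smat c2 X2 = smat (- c3) Y1 + smat (- c4) Y2" by (rule lin4_eq[OF c(2)])
  have ab: "c1 \<noteq> 0 \<or> c2 \<noteq> 0"
  proof (rule ccontr)
    assume h: "\<not> ?thesis"
    then have "smat (- c3) Y1 + smat (- c4) Y2 = 0" using Meq by (simp add: vec_eq_iff)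
    then have "- c3 = 0 \<and> - c4 = 0" using Y(3) unfolding indep2_def by blast
    then show False using h c(1) by simp
  qed
  define a where "a = c1"
  define b where "b = c2"
  have uv2: "\<And>x. x \<in> sp2 u2 w2 \<Longrightarrow> x \<in> {c *s u2 + d *s w2 | c d. True}" unfolding sp2_def .
  have qY1: "\<And>i j k l. q4 Y1 p q i j k l = 0"
    by (rule q4_wedgeV[OF W2(1)[unfolded sp2_def] uv2[OF p(3)] uv2[OF q(1)]])
  have qY2: "\<And>i j k l. q4 Y2 p q i j k l = 0"
    by (rule q4_wedgeV[OF W2(2)[unfolded sp2_def] uv2[OF p(3)] uv2[OF q(1)]])
  have q4M: "\<And>i j k l. q4 (smat a X1 + smat b X2) p q i j k l = 0"
    unfolding a_def b_def Meq q4_lin qY1 qY2 by simp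
  define rr where "rr = (- p$1 * a) *s e 2 + (p$0 * a) *s e 3 + (- p$1 * b) *s e 4 + (p$0 * b) *s e 5"
  have r23: "q$3 * rr$2 = q$2 * rr$3"
  proof -
    have "q4 (smat a X1 + smat b X2) p q 0 1 2 3 = 0" by (rule q4M)
    then show ?thesis using ptail by (simp add: q4_def pl_def X1_nth X2_nth rr_def algebra_simps)
  qed
  have r24: "q$4 * rr$2 = q$2 * rr$4"
  proof -
    have "q4 (smat a X1 + smat b X2) p q 0 1 2 4 = 0" by (rule q4M)
    then show ?thesis using ptail by (simp add: q4_def pl_def X1_nth X2_nth rr_def algebra_simps) (metis mult.commute)
  qed
  have r25: "q$5 * rr$2 = q$2 * rr$5"
  proof -
    have "q4 (smat a X1 + smat b X2) p q 0 1 2 5 = 0" by (rule q4M)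
    then show ?thesis using ptail by (simp add: q4_def pl_def X1_nth X2_nth rr_def algebra_simps)
  qed
  have r34: "q$4 * rr$3 = q$3 * rr$4"
  proof -
    have "q4 (smat a X1 + smat b X2) p q 0 1 3 4 = 0" by (rule q4M)
    then show ?thesis using ptail by (simp add: q4_def pl_def X1_nth X2_nth rr_def algebra_simps) (metis add.commute eq_neg_iff_add_eq_0)
  qed
  have r35: "q$5 * rr$3 = q$3 * rr$5"
  proof -
    have "q4 (smat a X1 + smat b X2) p q 0 1 3 5 = 0" by (rule q4M)
    then show ?thesis using ptail by (simp add: q4_def pl_def X1_nth X2_nth rr_def algebra_simps)
  qed
  have r45: "q$5 * rr$4 = q$4 * rr$5"
  proof -
    have "q4 (smat a X1 + smat b X2) p q 0 1 4 5 = 0" by (rule q4M)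
    then show ?thesis using ptail by (simp add: q4_def pl_def X1_nth X2_nth rr_def algebra_simps)
  qed
  have rel: "\<And>k l. k \<in> {2,3,4,5} \<Longrightarrow> l \<in> {2,3,4,5} \<Longrightarrow> q$l * rr$k = q$k * rr$l"
  proof -
    fix k l :: 6 assume k: "k \<in> {2,3,4,5}" and l: "l \<in> {2,3,4,5}"
    show "q$l * rr$k = q$k * rr$l"
      using k l r23 r24 r25 r34 r35 r45 by (simp only: insert_iff empty_iff) (elim disjE; simp)
  qed
  obtain k0 where k0: "k0 \<in> {2,3,4,5}" "q$k0 \<noteq> 0" using q(2) by blast
  have rk0: "rr$k0 \<noteq> 0"
  proof
    assume h: "rr$k0 = 0"
    have "\<And>l. l \<in> {2,3,4,5} \<Longrightarrow> rr$l = 0"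
    proof -
      fix l :: 6 assume l: "l \<in> {2,3,4,5}"
      have "q$k0 * rr$l = 0" using rel[OF k0(1) l] h by simp
      then show "rr$l = 0" using k0(2) by simp
    qed
    then have "rr$2 = 0" "rr$3 = 0" "rr$4 = 0" "rr$5 = 0" by simp_all
    then have "p$1 * a = 0" "p$0 * a = 0" "p$1 * b = 0" "p$0 * b = 0"
      by (simp_all add: rr_def)
    then show False using ab p01 unfolding a_def b_def by auto
  qed
  define lam where "lam = q$k0 / rr$k0"
  have lam0: "lam \<noteq> 0" using k0(2) rk0 lam_def by simp
  have qdec: "q = q$0 *s e 0 + q$1 *s e 1 + lam *s rr"
  proof -
    have ql: "\<And>l. l \<in> {2,3,4,5} \<Longrightarrow> q$l = lam * rr$l"
    proof -
      fix l :: 6 assume l: "l \<in> {2,3,4,5}"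
      have "q$l * rr$k0 = q$k0 * rr$l" by (rule rel[OF k0(1) l])
      then show "q$l = lam * rr$l" using rk0 unfolding lam_def by (simp add: field_simps)
    qed
    have "\<forall>i. q$i = (q$0 *s e 0 + q$1 *s e 1 + lam *s rr) $ i"
    proof -
      have rr01: "rr$0 = 0" "rr$1 = 0" by (simp_all add: rr_def)
      have "q$2 = lam * rr$2" "q$3 = lam * rr$3" "q$4 = lam * rr$4" "q$5 = lam * rr$5"
        using ql by simp_all
      then show ?thesis unfolding all6 using rr01 by simp
    qed
    then show ?thesis by (rule iffD2[OF vec_eq_iff])
  qed
  obtain s0 s1 where D: "p$0 * s1 - p$1 * s0 \<noteq> 0"
  proof (cases "p$0 = 0")
    case True then have "p$0 * 0 - p$1 * 1 \<noteq> 0" using p01 by simp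
    then show ?thesis using that by blast
  next
    case False then have "p$0 * 1 - p$1 * 0 \<noteq> 0" by simp
    then show ?thesis using that by blast
  qed
  obtain cc dd where E: "a * dd - b * cc \<noteq> 0"
  proof (cases "a = 0")
    case True then have "a * 0 - b * 1 \<noteq> 0" using ab unfolding a_def b_def by simp
    then show ?thesis using that by blast
  next
    case False then have "a * 1 - b * 0 \<noteq> 0" by simp
    then show ?thesis using that by blast
  qed
  obtain G where Gall: "invertible G \<and> G ** X1 ** transpose G = smat a X1 + smat b X2
     \<and> G ** X2 ** transpose G = smat cc X1 + smat dd X2
     \<and> G *v e 0 = p$0 *s e 0 + p$1 *s e 1
     \<and> (\<exists>\<nu> \<mu>. \<mu> \<noteq> 0 \<and> G *v (\<nu> *s e 0 + \<mu> *s e 3) =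
           q$0 *s e 0 + q$1 *s e 1 + lam *s ((- p$1 * a) *s e 2 + (p$0 * a) *s e 3 + (- p$1 * b) *s e 4 + (p$0 * b) *s e 5))"
    using G2_lemma[OF D E lam0, of "q$0" "q$1"] by (elim exE)
  have G: "invertible G" "G ** X1 ** transpose G = smat a X1 + smat b X2"
     "G ** X2 ** transpose G = smat cc X1 + smat dd X2"
     "G *v e 0 = p$0 *s e 0 + p$1 *s e 1"
    using Gall[THEN conjunct1] Gall[THEN conjunct2, THEN conjunct1]
      Gall[THEN conjunct2, THEN conjunct2, THEN conjunct1]
      Gall[THEN conjunct2, THEN conjunct2, THEN conjunct2, THEN conjunct1] by - assumption+
  have Gq: "\<exists>\<nu> \<mu>. \<mu> \<noteq> 0 \<and> G *v (\<nu> *s e 0 + \<mu> *s e 3) =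
           q$0 *s e 0 + q$1 *s e 1 + lam *s ((- p$1 * a) *s e 2 + (p$0 * a) *s e 3 + (- p$1 * b) *s e 4 + (p$0 * b) *s e 5)"
    using Gall[THEN conjunct2, THEN conjunct2, THEN conjunct2, THEN conjunct2] .
  obtain \<nu> \<mu> where mu: "\<mu> \<noteq> 0" and Gq0: "G *v (\<nu> *s e 0 + \<mu> *s e 3) = q$0 *s e 0 + q$1 *s e 1 + lam *s rr"
    using Gq unfolding rr_def by (elim exE conjE)
  have Gq': "G *v (\<nu> *s e 0 + \<mu> *s e 3) = q" using Gq0 by (simp only: qdec[symmetric])
  have Ge0: "G *v e 0 = p"
  proof -
    have "\<forall>i. p$i = (p$0 *s e 0 + p$1 *s e 1) $ i" unfolding all6 using ptail by simp
    then have "p = p$0 *s e 0 + p$1 *s e 1" by (rule iffD2[OF vec_eq_iff])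
    then show ?thesis by (rule trans[OF G(4) sym])
  qed
  obtain H where GH: "G ** H = mat 1" "H ** G = mat 1" using G(1) unfolding invertible_def by blast
  define Q where "Q = act H P"
  have QQ: "Q = span3 (H ** A ** transpose H) (H ** B ** transpose H) (H ** C ** transpose H)"
    unfolding Q_def PP(1) act_span3 ..
  have Qind: "indep3 (H ** A ** transpose H) (H ** B ** transpose H) (H ** C ** transpose H)"
    by (rule indep3_act[OF GH(1) PP(2)])
  have QR2: "R2 Q" unfolding Q_def by (rule R2_transfer[OF GH(1) R2])
  have QR6: "R6 Q" unfolding Q_def by (rule R6_transfer[OF GH R6])
  have QSK: "SK Q" unfolding Q_def by (rule SK_transfer[OF SK])
  have backG: "\<And>Z. H ** (G ** Z ** transpose G) ** transpose H = Z" by (simp only: act_comp GH(2) act_id)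
  have inQ: "\<And>Z. Z \<in> P \<Longrightarrow> H ** Z ** transpose H \<in> Q" unfolding Q_def act_def by blast
  have MP: "smat a X1 + smat b X2 \<in> P"
  proof -
    have "smat a X1 + smat b X2 + smat 0 X1 = smat a X1 + smat b X2" by (simp add: vec_eq_iff)
    then show ?thesis using span3_closed[OF XP(1) XP(2) XP(1), of a b 0] PP(1) by simp
  qed
  have MP2: "smat cc X1 + smat dd X2 \<in> P"
  proof -
    have "smat cc X1 + smat dd X2 + smat 0 X1 = smat cc X1 + smat dd X2" by (simp add: vec_eq_iff)
    then show ?thesis using span3_closed[OF XP(1) XP(2) XP(1), of cc dd 0] PP(1) by simp
  qed
  have X1Q: "X1 \<in> Q" using inQ[OF MP] unfolding G(2)[symmetric] backG .
  have X2Q: "X2 \<in> Q" using inQ[OF MP2] unfolding G(3)[symmetric] backG .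
  define Y1' where "Y1' = H ** Y1 ** transpose H"
  define Y2' where "Y2' = H ** Y2 ** transpose H"
  have Y'Q: "Y1' \<in> Q" "Y2' \<in> Q" unfolding Y1'_def Y2'_def using inQ Y by auto
  have Y'ind: "indep2 Y1' Y2'" unfolding Y1'_def Y2'_def by (rule indep2_act[OF GH(1) Y(3)])
  have img: "(*v) H ` sp2 u2 w2 = sp2 (H *v u2) (H *v w2)" unfolding sp2_def by (rule image_span2)
  have wv: "\<And>Z. Z \<in> wedgeV (sp2 u2 w2) \<Longrightarrow> H ** Z ** transpose H \<in> wedgeV (sp2 (H *v u2) (H *v w2))"
    using act_wedgeV[of H "sp2 u2 w2"] unfolding img act_def by blast
  have HG: "\<And>x. H *v (G *v x) = x" by (simp only: matrix_vector_mul_assoc GH(2) matrix_vector_mul_lid)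
  have e0W: "e 0 \<in> sp2 (H *v u2) (H *v w2)"
  proof -
    have "H *v p \<in> sp2 (H *v u2) (H *v w2)" using p(3) img by blast
    then show ?thesis unfolding Ge0[symmetric] HG .
  qed
  have e3W: "e 3 \<in> sp2 (H *v u2) (H *v w2)"
  proof -
    have hq: "H *v q = \<nu> *s e 0 + \<mu> *s e 3" unfolding Gq'[symmetric] HG ..
    have "H *v q \<in> sp2 (H *v u2) (H *v w2)" using q(1) img by blast
    then have "(1 / \<mu>) *s (H *v q) + (- \<nu> / \<mu>) *s e 0 \<in> sp2 (H *v u2) (H *v w2)"
      using e0W by (rule sp2_closed)
    moreover have "(1 / \<mu>) *s (H *v q) + (- \<nu> / \<mu>) *s e 0 = e 3"
      unfolding hq using mu by (simp add: vec_eq_iff field_simps)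
    ultimately show ?thesis by simp
  qed
  have bz: "\<And>Y. Y \<in> {Y1', Y2'} \<Longrightarrow> Y$1$2 = 0 \<and> Y$1$4 = 0 \<and> Y$2$4 = 0 \<and> Y$2$5 = 0 \<and> Y$4$5 = 0 \<and> Y$1$5 = 0"
  proof -
    fix Y assume "Y \<in> {Y1', Y2'}"
    then have "Y \<in> wedgeV (sp2 (H *v u2) (H *v w2))" unfolding Y1'_def Y2'_def using wv W2 by auto
    then have "\<And>i j k l. q4 Y (e 0) (e 3) i j k l = 0"
      using q4_wedgeV e0W e3W unfolding sp2_def by blast
    then show "Y$1$2 = 0 \<and> Y$1$4 = 0 \<and> Y$2$4 = 0 \<and> Y$2$5 = 0 \<and> Y$4$5 = 0 \<and> Y$1$5 = 0"
      by (rule q4_block)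
  qed
  obtain F where F: "invertible F" "act F plane_p = Q"
    using frame2[OF QQ Qind QR2 QR6 QSK X1Q X2Q Y'Q Y'ind bz] by blast
  have "act (G ** F) plane_p = P"
    unfolding act_act[symmetric] F(2) Q_def by (rule act_inv[OF GH(1)])
  moreover have "invertible (G ** F)" using G(1) F(1) by (rule invertible_mult)
  ultimately show ?thesis by blast
qed

lemma indepv_mv: fixes H G :: mat6 assumes GH: "G ** H = mat 1" and ind: "indepv u w"
  shows "indepv (H *v u) (H *v w)"
  unfolding indepv_def
proof (intro allI impI)
  fix a b assume "a *s (H *v u) + b *s (H *v w) = 0"
  then have "H *v (a *s u + b *s w) = 0" by (simp add: mv_lin)
  then have "G *v (H *v (a *s u + b *s w)) = 0" by simp
  then have "a *s u + b *s w = 0" by (simp only: matrix_vector_mul_assoc GH matrix_vector_mul_lid)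
  then show "a = 0 \<and> b = 0" using ind unfolding indepv_def by blast
qed

lemma SK_span3: assumes "skew A" "skew B" "skew C" shows "SK (span3 A B C)"
  unfolding SK_def span3_def
proof (intro ballI allI)
  fix X i j assume "X \<in> {smat a A + smat b B + smat c C | a b c. True}"
  then obtain a b c where X: "X = smat a A + smat b B + smat c C" by blast
  have sk: "\<And>M. skew M \<Longrightarrow> M$j$i = - M$i$j"
  proof -
    fix M :: mat6 assume "skew M"
    then have "transpose M $ i $ j = (- M) $ i $ j" unfolding skew_def by simp
    then show "M$j$i = - M$i$j" by (simp add: transpose_def)
  qed
  have "A$j$i = - A$i$j" "B$j$i = - B$i$j" "C$j$i = - C$i$j" using sk assms by blast+
  then show "X$j$i = - X$i$j" unfolding X by (simp add: algebra_simps)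
qed

lemma line0_eq: "line0 = span2 X1 X2" unfolding line0_def X1_def X2_def ..

lemma X_line0: "X1 \<in> line0" "X2 \<in> line0"
proof -
  have "X1 = smat 1 X1 + smat 0 X2" "X2 = smat 0 X1 + smat 1 X2" by (simp_all add: vec_eq_iff)
  then show "X1 \<in> line0" "X2 \<in> line0" unfolding line0_eq span2_def by blast+
qed

lemma indep_X: "indep2 X1 X2"
  unfolding indep2_def
proof (intro allI impI)
  fix a b assume h: "smat a X1 + smat b X2 = 0"
  have "(smat a X1 + smat b X2) $ 0 $ 2 = 0" "(smat a X1 + smat b X2) $ 0 $ 4 = 0" using h by simp_all
  then show "a = 0 \<and> b = 0" by (simp add: X1_nth X2_nth)
qed



theorem mainTheorem8:
  fixes P :: "mat6 set"
  assumes plane: "proj_plane P"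
    and rank4: "all_rank4 P"
    and common_point: "\<exists>p::vec6. p \<noteq> 0 \<and>
          (\<forall>L W. general_line L \<and> L \<subseteq> P \<and> is_pivot L W \<longrightarrow> p \<in> W)"
    and not_all_equal: "\<exists>L1 L2 W1 W2. general_line L1 \<and> L1 \<subseteq> P \<and> is_pivot L1 W1 \<and>
          general_line L2 \<and> L2 \<subseteq> P \<and> is_pivot L2 W2 \<and> W1 \<noteq> W2"
  shows "pgl_equiv P plane_p"
proof -
  obtain A B C where ABC: "skew A" "skew B" "skew C" "indep3 A B C" "P = span3 A B C"
    using plane unfolding proj_plane_def by blast
  have R2P: "R2 P" by (rule rank4_R2[OF rank4])
  have R6P: "R6 P" by (rule rank4_R6[OF rank4])
  have SKP: "SK P" unfolding ABC(5) by (rule SK_span3[OF ABC(1-3)])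
  obtain p where p: "p \<noteq> 0" "\<And>L W. general_line L \<Longrightarrow> L \<subseteq> P \<Longrightarrow> is_pivot L W \<Longrightarrow> p \<in> W"
    using common_point by blast
  obtain L1 L2 W1 W2 where L: "general_line L1" "L1 \<subseteq> P" "is_pivot L1 W1"
    "general_line L2" "L2 \<subseteq> P" "is_pivot L2 W2" "W1 \<noteq> W2"
    using not_all_equal by blast
  have pW: "p \<in> W1" "p \<in> W2" using p(2) L by blast+
  obtain g1 where g1: "invertible g1" "act g1 line0 = L1"
    using L(1) unfolding general_line_def pgl_equiv_def by blast
  obtain g2 where g2: "invertible g2" "act g2 line0 = L2"
    using L(4) unfolding general_line_def pgl_equiv_def by blast
  obtain u1 w1 where W1: "indepv u1 w1" "W1 = sp2 u1 w1" using L(3) unfolding is_pivot_def sub2_iff by blast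
  obtain u2 w2 where W2: "indepv u2 w2" "W2 = sp2 u2 w2" using L(6) unfolding is_pivot_def sub2_iff by blast
  have LW1: "L1 \<subseteq> wedgeV W1" and LW2: "L2 \<subseteq> wedgeV W2" using L(3) L(6) unfolding is_pivot_def by blast+
  obtain H where GH: "g1 ** H = mat 1" "H ** g1 = mat 1" using g1(1) unfolding invertible_def by blast
  obtain h2 where GH2: "g2 ** h2 = mat 1" "h2 ** g2 = mat 1" using g2(1) unfolding invertible_def by blast
  define P' where "P' = act H P"
  have P'eq: "P' = span3 (H ** A ** transpose H) (H ** B ** transpose H) (H ** C ** transpose H)"
    unfolding P'_def ABC(5) act_span3 ..
  have P'ind: "indep3 (H ** A ** transpose H) (H ** B ** transpose H) (H ** C ** transpose H)"
    by (rule indep3_act[OF GH(1) ABC(4)])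
  have R2': "R2 P'" unfolding P'_def by (rule R2_transfer[OF GH(1) R2P])
  have R6': "R6 P'" unfolding P'_def by (rule R6_transfer[OF GH R6P])
  have SK': "SK P'" unfolding P'_def by (rule SK_transfer[OF SKP])
  have inP': "\<And>Z. Z \<in> P \<Longrightarrow> H ** Z ** transpose H \<in> P'" unfolding P'_def act_def by blast
  have backG: "\<And>Z. H ** (g1 ** Z ** transpose g1) ** transpose H = Z" by (simp only: act_comp GH(2) act_id)
  have img: "\<And>u w. (*v) H ` sp2 u w = sp2 (H *v u) (H *v w)" unfolding sp2_def by (rule image_span2)
  have wv: "\<And>Z W. Z \<in> wedgeV W \<Longrightarrow> H ** Z ** transpose H \<in> wedgeV ((*v) H ` W)"
    using act_wedgeV unfolding act_def by blast
  have g1X: "g1 ** X1 ** transpose g1 \<in> L1" "g1 ** X2 ** transpose g1 \<in> L1"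
    using X_line0 g1(2) unfolding act_def by blast+
  have X1P': "X1 \<in> P'" using inP'[of "g1 ** X1 ** transpose g1"] g1X(1) L(2) unfolding backG by blast
  have X2P': "X2 \<in> P'" using inP'[of "g1 ** X2 ** transpose g1"] g1X(2) L(2) unfolding backG by blast
  have X1W: "X1 \<in> wedgeV (sp2 (H *v u1) (H *v w1))"
    using wv[of "g1 ** X1 ** transpose g1" W1] g1X(1) LW1 unfolding backG W1(2) img by blast
  have X2W: "X2 \<in> wedgeV (sp2 (H *v u1) (H *v w1))"
    using wv[of "g1 ** X2 ** transpose g1" W1] g1X(2) LW1 unfolding backG W1(2) img by blast
  have ind1: "indepv (H *v u1) (H *v w1)" by (rule indepv_mv[OF GH(1) W1(1)])
  have ind2: "indepv (H *v u2) (H *v w2)" by (rule indepv_mv[OF GH(1) W2(1)])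
  define Y1 where "Y1 = H ** (g2 ** X1 ** transpose g2) ** transpose H"
  define Y2 where "Y2 = H ** (g2 ** X2 ** transpose g2) ** transpose H"
  have g2X: "g2 ** X1 ** transpose g2 \<in> L2" "g2 ** X2 ** transpose g2 \<in> L2"
    using X_line0 g2(2) unfolding act_def by blast+
  have Y1P': "Y1 \<in> P'" unfolding Y1_def using inP' g2X(1) L(5) by blast
  have Y2P': "Y2 \<in> P'" unfolding Y2_def using inP' g2X(2) L(5) by blast
  have Y1W: "Y1 \<in> wedgeV (sp2 (H *v u2) (H *v w2))"
    unfolding Y1_def using wv[of "g2 ** X1 ** transpose g2" W2] g2X(1) LW2 unfolding W2(2) img by blast
  have Y2W: "Y2 \<in> wedgeV (sp2 (H *v u2) (H *v w2))"
    unfolding Y2_def using wv[of "g2 ** X2 ** transpose g2" W2] g2X(2) LW2 unfolding W2(2) img by blast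
  have Yind: "indep2 Y1 Y2"
  proof -
    have "(h2 ** g1) ** (H ** g2) = mat 1"
      by (metis GH(1) GH2(2) matrix_mul_assoc matrix_mul_lid)
    moreover have "Y1 = (H ** g2) ** X1 ** transpose (H ** g2)" "Y2 = (H ** g2) ** X2 ** transpose (H ** g2)"
      unfolding Y1_def Y2_def by (simp_all only: act_comp)
    ultimately show ?thesis using indep2_act[of "h2 ** g1" "H ** g2" X1 X2] indep_X by simp
  qed
  have HG: "\<And>x. g1 *v (H *v x) = x" by (simp only: matrix_vector_mul_assoc GH(1) matrix_vector_mul_lid)
  have neq: "sp2 (H *v u1) (H *v w1) \<noteq> sp2 (H *v u2) (H *v w2)"
  proof
    assume "sp2 (H *v u1) (H *v w1) = sp2 (H *v u2) (H *v w2)"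
    then have "(*v) H ` W1 = (*v) H ` W2" unfolding W1(2) W2(2) img .
    then have "(*v) g1 ` ((*v) H ` W1) = (*v) g1 ` ((*v) H ` W2)" by simp
    then have "W1 = W2" by (simp add: image_image HG)
    then show False using L(7) by simp
  qed
  have p': "H *v p \<noteq> 0" "H *v p \<in> sp2 (H *v u1) (H *v w1)" "H *v p \<in> sp2 (H *v u2) (H *v w2)"
  proof -
    show "H *v p \<noteq> 0"
    proof
      assume "H *v p = 0"
      then have "g1 *v (H *v p) = 0" by simp
      then show False using p(1) HG by simp
    qed
    show "H *v p \<in> sp2 (H *v u1) (H *v w1)" using pW(1) unfolding W1(2) img[symmetric] by blast
    show "H *v p \<in> sp2 (H *v u2) (H *v w2)" using pW(2) unfolding W2(2) img[symmetric] by blast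
  qed
  obtain F where F: "invertible F" "act F plane_p = P'"
    using frame1[OF P'eq P'ind R2' R6' SK' X1P' X2P' X1W X2W ind1 Y1P' Y2P' Yind Y1W Y2W ind2 neq p'] by blast
  have PF: "act (g1 ** F) plane_p = P"
    unfolding act_act[symmetric] F(2) P'_def by (rule act_inv[OF GH(1)])
  have "invertible (g1 ** F)" using g1(1) F(1) by (rule invertible_mult)
  then obtain K where K: "(g1 ** F) ** K = mat 1" "K ** (g1 ** F) = mat 1" unfolding invertible_def by blast
  have "invertible K" unfolding invertible_def using K by blast
  moreover have "act K P = plane_p" unfolding PF[symmetric] by (rule act_inv[OF K(2)])
  ultimately show ?thesis unfolding pgl_equiv_def by blast
qed

end
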